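(* For every integer $n\ge0$, the following polynomial identities hold: (1) $\displaystyle \mathrm B_{n+1}(x,y)=\sum_{k=0}^n\binom nk\mathrm B_k(x)\,y^{n-k}=\sum_{k=0}^n\binom nk\mathrm{Fe}_k(x)(y+1)^{n-k}$; (2) $\displaystyle \mathrm C_{n+1}(x,y)=\sum_{k=0}^n\binom nk\mathrm{Mo}_k(x)\,y^{n-k}=\sum_{k=0}^{\lfloor n/2\rfloor}\mathcal C_k\binom n{2k}x^k(y+1)^{n-2k}$, where $\mathcal C_k=\frac1{k+1}\binom{2k}k$.
   Context: A set partition of $[n]=\{1,\dots,n\}$ is a set of nonempty pairwise disjoint sets (blocks) with union $[n]$ ($[0]=\emptyset$ has exactly one partition, the empty one). A pair $(i,j)$ is an arc of $\Lambda$ if $i<j$ lie in the same block and $j$ is the least element of that block greater than $i$; $\mathrm{Arc}(\Lambda)$ is the set of arcs and $\mathrm{Cov}(\Lambda)=\{(i,j)\in\mathrm{Arc}(\Lambda):j=i+1\}$. $\Lambda$ is noncrossing if there are no arcs $(i,k),(j,l)$ with $i<j<k<l$; feasible if every block has at least two elements; poor if every block has at most two elements. $\Pi(n)$ and $\mathrm{NC}(n)$ are the sets of partitions and noncrossing partitions of $[n]$. Define $\mathrm B_n(x,y)=\sum_{\Lambda\in\Pi(n)}x^{|\mathrm{Arc}(\Lambda)\setminus\mathrm{Cov}(\Lambda)|}y^{|\mathrm{Cov}(\Lambda)|}$, $\mathrm C_n(x,y)$ the same sum over $\mathrm{NC}(n)$, $\mathrm B_n(x)=\mathrm B_n(x,x)$,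 $\mathrm{Fe}_n(x)=\sum_{\text{feasible }\Lambda\in\Pi(n)}x^{|\mathrm{Arc}(\Lambda)|}$ and $\mathrm{Mo}_n(x)=\sum_{\text{poor }\Lambda\in\mathrm{NC}(n)}x^{|\mathrm{Arc}(\Lambda)|}$. *)

theory Defs
  imports Main "HOL-Library.Disjoint_Sets"
begin

definition set_partitions :: "nat \<Rightarrow> nat set set set" where
  "set_partitions n = {P. partition_on {1..n} P}"

definition Arc :: "nat set set \<Rightarrow> (nat \<times> nat) set" where
  "Arc P = {(i, j). i < j \<and> (\<exists>B\<in>P. i \<in> B \<and> j \<in> B \<and> (\<forall>k\<in>B. i < k \<longrightarrow> j \<le> k))}"

definition Cov :: "nat set set \<Rightarrow> (nat \<times> nat) set" where
  "Cov P = {(i, j) \<in> Arc P. j = i + 1}"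

definition noncrossing :: "nat set set \<Rightarrow> bool" where
  "noncrossing P \<longleftrightarrow> \<not> (\<exists>i j k l. i < j \<and> j < k \<and> k < l \<and> (i, k) \<in> Arc P \<and> (j, l) \<in> Arc P)"

definition feasible :: "nat set set \<Rightarrow> bool" where
  "feasible P \<longleftrightarrow> (\<forall>B\<in>P. card B \<ge> 2)"

definition poor :: "nat set set \<Rightarrow> bool" where
  "poor P \<longleftrightarrow> (\<forall>B\<in>P. card B \<le> 2)"

definition NC :: "nat \<Rightarrow> nat set set set" where
  "NC n = {P \<in> set_partitions n. noncrossing P}"

text \<open>Polynomials are represented by their evaluation at arbitrary elements of a commutative ring.\<close>
definition Bxy :: "nat \<Rightarrow> 'a::comm_ring_1 \<Rightarrow> 'a \<Rightarrow> 'a" where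
  "Bxy n x y = (\<Sum>P\<in>set_partitions n. x ^ card (Arc P - Cov P) * y ^ card (Cov P))"

definition Cxy :: "nat \<Rightarrow> 'a::comm_ring_1 \<Rightarrow> 'a \<Rightarrow> 'a" where
  "Cxy n x y = (\<Sum>P\<in>NC n. x ^ card (Arc P - Cov P) * y ^ card (Cov P))"

definition Bx :: "nat \<Rightarrow> 'a::comm_ring_1 \<Rightarrow> 'a" where
  "Bx n x = Bxy n x x"

definition Fe :: "nat \<Rightarrow> 'a::comm_ring_1 \<Rightarrow> 'a" where
  "Fe n x = (\<Sum>P\<in>{P \<in> set_partitions n. feasible P}. x ^ card (Arc P))"

definition Mo :: "nat \<Rightarrow> 'a::comm_ring_1 \<Rightarrow> 'a" where
  "Mo n x = (\<Sum>P\<in>{P \<in> NC n. poor P}. x ^ card (Arc P))"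

definition catalan :: "nat \<Rightarrow> nat" where
  "catalan k = ((2 * k) choose k) div (k + 1)"

end

theory Submission
  imports Defs
begin


definition newP :: "nat \<Rightarrow> nat set set \<Rightarrow> nat set set" where
  "newP n Q = insert {Suc n} Q"
definition insP :: "nat \<Rightarrow> nat set set \<Rightarrow> nat set \<Rightarrow> nat set set" where
  "insP n Q B = insert (insert (Suc n) B) (Q - {B})"

lemma sp_iff: "P \<in> set_partitions n \<longleftrightarrow> partition_on {1..n} P"
  by (simp add: set_partitions_def)

lemma finite_sp: "finite (set_partitions n)"
  unfolding set_partitions_def by (rule finitely_many_partition_on) simp

lemma sp_block:
  assumes "P \<in> set_partitions n" "B \<in> P"
  shows "B \<subseteq> {1..n}" "B \<noteq> {}" "finite B"
proof -
  show 1: "B \<subseteq> {1..n}" using assms by (auto simp: sp_iff partition_on_def)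
  show "B \<noteq> {}" using assms by (auto simp: sp_iff partition_on_def)
  show "finite B" using 1 finite_subset by blast
qed

lemma sp_finite: "P \<in> set_partitions n \<Longrightarrow> finite P"
  by (rule finite_elements[of "{1..n}"]) (auto simp: sp_iff)

lemma sp_disj: "P \<in> set_partitions n \<Longrightarrow> B \<in> P \<Longrightarrow> C \<in> P \<Longrightarrow> x \<in> B \<Longrightarrow> x \<in> C \<Longrightarrow> B = C"
  unfolding sp_iff partition_on_def disjoint_def pairwise_def disjnt_def by blast

lemma sp_cover: "P \<in> set_partitions n \<Longrightarrow> x \<in> {1..n} \<Longrightarrow> \<exists>B\<in>P. x \<in> B"
  unfolding sp_iff partition_on_def by blast

lemma sp_union: "P \<in> set_partitions n \<Longrightarrow> \<Union>P = {1..n}"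
  unfolding sp_iff partition_on_def by blast

lemma sp_intro:
  assumes "\<Union>P = {1..n}" "\<And>B C x. B \<in> P \<Longrightarrow> C \<in> P \<Longrightarrow> x \<in> B \<Longrightarrow> x \<in> C \<Longrightarrow> B = C" "{} \<notin> P"
  shows "P \<in> set_partitions n"
  unfolding sp_iff partition_on_def disjoint_def pairwise_def disjnt_def using assms by blast

lemma newP_sp: assumes "Q \<in> set_partitions n" shows "newP n Q \<in> set_partitions (Suc n)"
proof (rule sp_intro)
  show "\<Union>(newP n Q) = {1..Suc n}" using sp_union[OF assms] by (auto simp: newP_def)
  show "{} \<notin> newP n Q" using sp_block(2)[OF assms] by (auto simp: newP_def)
  fix B C x assume "B \<in> newP n Q" "C \<in> newP n Q" "x \<in> B" "x \<in> C"
  then show "B = C" using sp_disj[OF assms] sp_block(1)[OF assms] unfolding newP_def by fastforce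
qed

lemma insP_sp: assumes "Q \<in> set_partitions n" "B \<in> Q" shows "insP n Q B \<in> set_partitions (Suc n)"
proof (rule sp_intro)
  have "\<Union>(insP n Q B) = insert (Suc n) (\<Union>Q)" using assms(2) by (auto simp: insP_def)
  then show "\<Union>(insP n Q B) = {1..Suc n}" using sp_union[OF assms(1)] by (simp add: atLeastAtMostSuc_conv)
  show "{} \<notin> insP n Q B" using sp_block(2)[OF assms(1)] by (auto simp: insP_def)
  fix C D x assume C: "C \<in> insP n Q B" and D: "D \<in> insP n Q B" and xC: "x \<in> C" and xD: "x \<in> D"
  have key: "False" if "C' = insert (Suc n) B" "D' \<in> Q - {B}" "x \<in> C'" "x \<in> D'" for C' D'
  proof -
    have "D' \<subseteq> {1..n}" using that(2) sp_block(1)[OF assms(1)] by blast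
    then have "x \<in> {1..n}" using that(4) by blast
    then have "x \<in> B" using that(1,3) by auto
    then have "D' = B" using sp_disj[OF assms(1), of D' B x] that(2,4) assms(2) by auto
    then show False using that(2) by auto
  qed
  show "C = D"
  proof (cases "C = insert (Suc n) B")
    case True
    then show ?thesis using key[of C D] D xC xD unfolding insP_def by auto
  next
    case False
    then have C': "C \<in> Q - {B}" using C unfolding insP_def by auto
    show ?thesis
    proof (cases "D = insert (Suc n) B")
      case True
      then show ?thesis using key[of D C] C' xC xD by auto
    next
      case False
      then have "D \<in> Q - {B}" using D unfolding insP_def by auto
      then show ?thesis using C' sp_disj[OF assms(1), of C D x] xC xD by auto
    qed
  qed
qed

lemma sp_Suc_cases:
  assumes P: "P \<in> set_partitions (Suc n)"
  shows "(\<exists>Q\<in>set_partitions n. P = newP n Q) \<or> (\<exists>Q\<in>set_partitions n. \<exists>B\<in>Q. P = insP n Q B)"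
proof -
  obtain B0 where B0: "B0 \<in> P" "Suc n \<in> B0" using sp_cover[OF P, of "Suc n"] by auto
  have B0sub: "B0 \<subseteq> {1..Suc n}" using sp_block[OF P B0(1)] by auto
  show ?thesis
  proof (cases "B0 = {Suc n}")
    case True
    let ?Q = "P - {B0}"
    have "?Q \<in> set_partitions n"
    proof (rule sp_intro)
      show "\<Union>?Q = {1..n}"
      proof
        show "\<Union>?Q \<subseteq> {1..n}"
        proof
          fix x assume "x \<in> \<Union>?Q"
          then obtain C where C: "C \<in> P" "C \<noteq> B0" "x \<in> C" by auto
          have "x \<noteq> Suc n" using sp_disj[OF P C(1) B0(1)] C B0 by auto
          then show "x \<in> {1..n}" using sp_block(1)[OF P C(1)] C(3) by auto
        qed
        show "{1..n} \<subseteq> \<Union>?Q"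
        proof
          fix x assume x: "x \<in> {1..n}"
          then obtain C where "C \<in> P" "x \<in> C" using sp_cover[OF P, of x] by auto
          moreover have "C \<noteq> B0" using x True \<open>x \<in> C\<close> by auto
          ultimately show "x \<in> \<Union>?Q" by auto
        qed
      qed
      show "{} \<notin> ?Q" using sp_block(2)[OF P] by auto
    qed (use sp_disj[OF P] in blast)
    moreover have "P = newP n ?Q" using True B0 by (auto simp: newP_def)
    ultimately show ?thesis by blast
  next
    case False
    define B where "B = B0 - {Suc n}"
    have Bne: "B \<noteq> {}" using False B0 unfolding B_def by auto
    have BnP: "B \<notin> P"
    proof
      assume "B \<in> P"
      obtain z where "z \<in> B" using Bne by auto
      then have "B = B0" using sp_disj[OF P \<open>B \<in> P\<close> B0(1), of z] unfolding B_def by auto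
      then show False using B0 unfolding B_def by auto
    qed
    let ?Q = "insert B (P - {B0})"
    have Q: "?Q \<in> set_partitions n"
    proof (rule sp_intro)
      show "\<Union>?Q = {1..n}"
      proof
        show "\<Union>?Q \<subseteq> {1..n}"
        proof
          fix x assume "x \<in> \<Union>?Q"
          then obtain C where C: "C \<in> ?Q" "x \<in> C" by auto
          show "x \<in> {1..n}"
          proof (cases "C = B")
            case True
            have "x \<in> B0" "x \<noteq> Suc n" using C(2) unfolding True B_def by auto
            then show ?thesis using B0sub by auto
          next
            case False
            then have "C \<in> P" "C \<noteq> B0" using C by auto
            have "x \<noteq> Suc n" using sp_disj[OF P \<open>C \<in> P\<close> B0(1)] C B0 \<open>C \<noteq> B0\<close> by auto
            then show ?thesis using sp_block(1)[OF P \<open>C \<in> P\<close>] C(2) by auto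
          qed
        qed
        show "{1..n} \<subseteq> \<Union>?Q"
        proof
          fix x assume x: "x \<in> {1..n}"
          then obtain C where "C \<in> P" "x \<in> C" using sp_cover[OF P, of x] by auto
          then show "x \<in> \<Union>?Q" using x unfolding B_def by (cases "C = B0") auto
        qed
      qed
      show "{} \<notin> ?Q" using sp_block(2)[OF P] Bne by auto
      fix C D x assume "C \<in> ?Q" "D \<in> ?Q" "x \<in> C" "x \<in> D"
      then show "C = D" using sp_disj[OF P] B0 unfolding B_def
        by (smt (verit) Diff_iff insert_iff)
    qed
    moreover have "P = insP n ?Q B"
    proof -
      have "insert (Suc n) B = B0" using B0 unfolding B_def by auto
      moreover have "?Q - {B} = P - {B0}" using BnP by auto
      ultimately show ?thesis using B0 by (auto simp: insP_def)
    qed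
    ultimately show ?thesis by blast
  qed
qed

lemma newP_inj: "Q \<in> set_partitions n \<Longrightarrow> Q' \<in> set_partitions n \<Longrightarrow> newP n Q = newP n Q' \<Longrightarrow> Q = Q'"
proof -
  assume Q: "Q \<in> set_partitions n" and Q': "Q' \<in> set_partitions n" and e: "newP n Q = newP n Q'"
  have "{Suc n} \<notin> Q" using sp_block(1)[OF Q] by fastforce
  moreover have "{Suc n} \<notin> Q'" using sp_block(1)[OF Q'] by fastforce
  ultimately show "Q = Q'" using e unfolding newP_def by (metis insert_ident)
qed

lemma newP_ne_insP: "Q \<in> set_partitions n \<Longrightarrow> Q' \<in> set_partitions n \<Longrightarrow> B \<in> Q' \<Longrightarrow> newP n Q \<noteq> insP n Q' B"
proof
  assume Q: "Q \<in> set_partitions n" and Q': "Q' \<in> set_partitions n" and B: "B \<in> Q'" and e: "newP n Q = insP n Q' B"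
  have "insert (Suc n) B \<in> newP n Q" using e by (simp add: insP_def)
  moreover have "insert (Suc n) B \<notin> Q" using sp_block(1)[OF Q] by fastforce
  ultimately have "insert (Suc n) B = {Suc n}" by (simp add: newP_def)
  moreover obtain z where "z \<in> B" using sp_block(2)[OF Q' B] by auto
  moreover have "z \<noteq> Suc n" using sp_block(1)[OF Q' B] \<open>z \<in> B\<close> by auto
  ultimately show False by auto
qed

lemma insP_inj:
  assumes Q: "Q \<in> set_partitions n" and Q': "Q' \<in> set_partitions n" and B: "B \<in> Q" and B': "B' \<in> Q'"
    and e: "insP n Q B = insP n Q' B'"
  shows "Q = Q' \<and> B = B'"
proof -
  have nB: "Suc n \<notin> B" using sp_block(1)[OF Q B] by auto
  have nB': "Suc n \<notin> B'" using sp_block(1)[OF Q' B'] by auto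
  have "insert (Suc n) B \<in> insP n Q B" by (simp add: insP_def)
  then have "insert (Suc n) B \<in> insP n Q' B'" using e by simp
  moreover have "insert (Suc n) B \<notin> Q'" using sp_block(1)[OF Q'] by fastforce
  ultimately have "insert (Suc n) B = insert (Suc n) B'" unfolding insP_def by blast
  then have BB: "B = B'" using nB nB' by (metis insert_ident)
  have "insert (Suc n) B \<notin> Q" using sp_block(1)[OF Q] by fastforce
  then have "Q - {B} = insP n Q B - {insert (Suc n) B}" by (auto simp: insP_def)
  also have "\<dots> = Q' - {B}" using e BB \<open>insert (Suc n) B \<notin> Q'\<close> by (auto simp: insP_def)
  finally have "Q = Q'" using B B' BB by (metis insert_Diff)
  with BB show ?thesis by simp
qed

lemma sp_decomp:
  "(\<Sum>P\<in>set_partitions (Suc n). f P) =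
   (\<Sum>Q\<in>set_partitions n. f (newP n Q) + (\<Sum>B\<in>Q. f (insP n Q B)))"
proof -
  define D where "D = Sigma (set_partitions n) (\<lambda>Q. insert None (Some ` Q))"
  define \<phi> where "\<phi> = (\<lambda>(Q, c). case c of None \<Rightarrow> newP n Q | Some B \<Rightarrow> insP n Q B)"
  have bij: "bij_betw \<phi> D (set_partitions (Suc n))"
    unfolding bij_betw_def
  proof
    show "inj_on \<phi> D"
    proof (rule inj_onI)
      fix a b assume a: "a \<in> D" and b: "b \<in> D" and e: "\<phi> a = \<phi> b"
      obtain Q c where ac: "a = (Q, c)" by fastforce
      obtain Q' c' where bc: "b = (Q', c')" by fastforce
      have Q: "Q \<in> set_partitions n" and Q': "Q' \<in> set_partitions n" using a b ac bc by (auto simp: D_def)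
      show "a = b"
      proof (cases c)
        case None
        show ?thesis
        proof (cases c')
          case None
          then show ?thesis using \<open>c = None\<close> e ac bc newP_inj[OF Q Q'] by (auto simp: \<phi>_def)
        next
          case (Some B')
          then have "B' \<in> Q'" using b bc by (auto simp: D_def)
          then show ?thesis using \<open>c = None\<close> Some e ac bc newP_ne_insP[OF Q Q'] by (auto simp: \<phi>_def)
        qed
      next
        case (Some B)
        then have B: "B \<in> Q" using a ac by (auto simp: D_def)
        show ?thesis
        proof (cases c')
          case None
          then show ?thesis using Some e ac bc newP_ne_insP[OF Q' Q B] by (auto simp: \<phi>_def)
        next
          case (Some B')
          then have "B' \<in> Q'" using b bc by (auto simp: D_def)
          then show ?thesis using \<open>c = Some B\<close> Some e ac bc insP_inj[OF Q Q' B] by (auto simp: \<phi>_def)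
        qed
      qed
    qed
    show "\<phi> ` D = set_partitions (Suc n)"
    proof
      show "\<phi> ` D \<subseteq> set_partitions (Suc n)"
        by (auto simp: D_def \<phi>_def newP_sp insP_sp)
      show "set_partitions (Suc n) \<subseteq> \<phi> ` D"
      proof
        fix P assume "P \<in> set_partitions (Suc n)"
        from sp_Suc_cases[OF this] show "P \<in> \<phi> ` D"
        proof
          assume "\<exists>Q\<in>set_partitions n. P = newP n Q"
          then obtain Q where "Q \<in> set_partitions n" "P = newP n Q" by auto
          then have "(Q, None) \<in> D" "\<phi> (Q, None) = P" by (auto simp: D_def \<phi>_def)
          then show ?thesis by (metis image_eqI)
        next
          assume "\<exists>Q\<in>set_partitions n. \<exists>B\<in>Q. P = insP n Q B"
          then obtain Q B where "Q \<in> set_partitions n" "B \<in> Q" "P = insP n Q B" by auto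
          then have "(Q, Some B) \<in> D" "\<phi> (Q, Some B) = P" by (auto simp: D_def \<phi>_def)
          then show ?thesis by (metis image_eqI)
        qed
      qed
    qed
  qed
  have "(\<Sum>P\<in>set_partitions (Suc n). f P) = (\<Sum>a\<in>D. f (\<phi> a))"
    using sum.reindex_bij_betw[OF bij, of f] by simp
  also have "\<dots> = (\<Sum>(Q,c)\<in>D. f (\<phi> (Q, c)))"
    by (rule sum.cong) auto
  also have "\<dots> = (\<Sum>Q\<in>set_partitions n. \<Sum>c\<in>insert None (Some ` Q). f (\<phi> (Q, c)))"
    unfolding D_def by (rule sum.Sigma[symmetric]) (auto simp: finite_sp sp_finite)
  also have "\<dots> = (\<Sum>Q\<in>set_partitions n. f (newP n Q) + (\<Sum>B\<in>Q. f (insP n Q B)))"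
  proof (rule sum.cong[OF refl])
    fix Q assume "Q \<in> set_partitions n"
    then have "finite Q" by (rule sp_finite)
    then show "(\<Sum>c\<in>insert None (Some ` Q). f (\<phi> (Q, c))) = f (newP n Q) + (\<Sum>B\<in>Q. f (insP n Q B))"
      by (simp add: sum.reindex \<phi>_def)
  qed
  finally show ?thesis .
qed

definition arcsB :: "nat set \<Rightarrow> (nat \<times> nat) set" where
  "arcsB B = {(i, j). i < j \<and> i \<in> B \<and> j \<in> B \<and> (\<forall>k\<in>B. i < k \<longrightarrow> j \<le> k)}"

lemma Arc_Union: "Arc P = (\<Union>B\<in>P. arcsB B)"
  by (auto simp: Arc_def arcsB_def)

lemma Arc_insert: "Arc (insert X P) = arcsB X \<union> Arc P"
  by (simp add: Arc_Union)

lemma Arc_remove: "B \<in> P \<Longrightarrow> arcsB B \<union> Arc (P - {B}) = Arc P"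
  by (auto simp: Arc_Union)

lemma arcsB_single: "arcsB {a} = {}"
  by (auto simp: arcsB_def)

lemma arcsB_ins:
  assumes "finite B" "B \<noteq> {}" "\<forall>b\<in>B. b < m"
  shows "arcsB (insert m B) = insert (Max B, m) (arcsB B)"
proof
  have MB: "Max B \<in> B" "\<forall>b\<in>B. b \<le> Max B" using assms by auto
  show "arcsB (insert m B) \<subseteq> insert (Max B, m) (arcsB B)"
  proof
    fix p assume p: "p \<in> arcsB (insert m B)"
    obtain i j where ij: "p = (i, j)" by fastforce
    have ij2: "i < j" "i \<in> insert m B" "j \<in> insert m B" "\<forall>k\<in>insert m B. i < k \<longrightarrow> j \<le> k"
      using p ij by (auto simp: arcsB_def)
    have iB: "i \<in> B" using ij2 assms(3) by auto
    show "p \<in> insert (Max B, m) (arcsB B)"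
    proof (cases "j = m")
      case True
      have "i = Max B"
      proof (rule ccontr)
        assume "i \<noteq> Max B"
        then have "i < Max B" using MB iB by (meson le_neq_implies_less)
        then have "m \<le> Max B" using ij2(4) MB True by auto
        then show False using assms(3) MB by auto
      qed
      then show ?thesis using ij True by simp
    next
      case False
      then have "j \<in> B" using ij2 by auto
      then show ?thesis using ij ij2 iB by (auto simp: arcsB_def)
    qed
  qed
  show "insert (Max B, m) (arcsB B) \<subseteq> arcsB (insert m B)"
    using MB assms(3) by (auto simp: arcsB_def)
qed

lemma Arc_sub: "P \<in> set_partitions n \<Longrightarrow> Arc P \<subseteq> {1..n} \<times> {1..n}"
  using sp_block(1) by (fastforce simp: Arc_def)

lemma Arc_finite: "P \<in> set_partitions n \<Longrightarrow> finite (Arc P)"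
  using Arc_sub finite_subset by blast

lemma Arc_newP: "Q \<in> set_partitions n \<Longrightarrow> Arc (newP n Q) = Arc Q"
  by (simp add: newP_def Arc_insert arcsB_single)

lemma block_Max:
  assumes "Q \<in> set_partitions n" "B \<in> Q"
  shows "Max B \<in> B" "Max B \<le> n" "1 \<le> Max B" "\<forall>b\<in>B. b \<le> Max B"
proof -
  show M: "Max B \<in> B" using sp_block[OF assms] by auto
  show "Max B \<le> n" "1 \<le> Max B" using M sp_block(1)[OF assms] by auto
  show "\<forall>b\<in>B. b \<le> Max B" using sp_block[OF assms] by auto
qed

lemma Arc_insP:
  assumes Q: "Q \<in> set_partitions n" and B: "B \<in> Q"
  shows "Arc (insP n Q B) = insert (Max B, Suc n) (Arc Q)"
proof -
  have "arcsB (insert (Suc n) B) = insert (Max B, Suc n) (arcsB B)"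
    using sp_block[OF Q B] by (intro arcsB_ins) auto
  then show ?thesis unfolding insP_def Arc_insert using Arc_remove[OF B] by auto
qed

lemma Arc_insP_new: "Q \<in> set_partitions n \<Longrightarrow> (Max B, Suc n) \<notin> Arc Q"
  using Arc_sub by fastforce

lemma Cov_newP: "Q \<in> set_partitions n \<Longrightarrow> Cov (newP n Q) = Cov Q"
  by (simp add: Cov_def Arc_newP)

lemma Cov_insP:
  assumes Q: "Q \<in> set_partitions n" and B: "B \<in> Q"
  shows "Cov (insP n Q B) = (if Max B = n then insert (Max B, Suc n) (Cov Q) else Cov Q)"
  using Arc_insP[OF Q B] by (auto simp: Cov_def)

lemma ArcCov_insP:
  assumes Q: "Q \<in> set_partitions n" and B: "B \<in> Q"
  shows "Arc (insP n Q B) - Cov (insP n Q B) =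
    (if Max B = n then Arc Q - Cov Q else insert (Max B, Suc n) (Arc Q - Cov Q))"
  using Arc_insP[OF Q B] Cov_insP[OF Q B] Arc_insP_new[OF Q] by (auto simp: Cov_def)

definition wt :: "'a::comm_ring_1 \<Rightarrow> 'a \<Rightarrow> nat set set \<Rightarrow> 'a" where
  "wt x y P = x ^ card (Arc P - Cov P) * y ^ card (Cov P)"

lemma wt_newP: "Q \<in> set_partitions n \<Longrightarrow> wt x y (newP n Q) = wt x y Q"
  by (simp add: wt_def Arc_newP Cov_newP)

lemma wt_insP:
  assumes Q: "Q \<in> set_partitions n" and B: "B \<in> Q"
  shows "wt x y (insP n Q B) = wt x y Q * (if Max B = n then y else x)"
proof -
  have f0: "Cov Q \<subseteq> Arc Q" by (auto simp: Cov_def)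
  have f1: "finite (Cov Q)" "finite (Arc Q - Cov Q)" using Arc_finite[OF Q] finite_subset[OF f0] by auto
  have n1: "(Max B, Suc n) \<notin> Cov Q" "(Max B, Suc n) \<notin> Arc Q - Cov Q"
    using Arc_insP_new[OF Q] by (auto simp: Cov_def)
  show ?thesis
  proof (cases "Max B = n")
    case True
    have "Arc (insP n Q B) - Cov (insP n Q B) = Arc Q - Cov Q" "Cov (insP n Q B) = insert (Max B, Suc n) (Cov Q)"
      using ArcCov_insP[OF Q B] Cov_insP[OF Q B] True by auto
    then show ?thesis using f1 n1 True by (simp add: wt_def mult_ac)
  next
    case False
    have "Arc (insP n Q B) - Cov (insP n Q B) = insert (Max B, Suc n) (Arc Q - Cov Q)" "Cov (insP n Q B) = Cov Q"
      using ArcCov_insP[OF Q B] Cov_insP[OF Q B] False by auto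
    then show ?thesis using f1 n1 False by (simp add: wt_def mult_ac)
  qed
qed

lemma wt_xx: "P \<in> set_partitions n \<Longrightarrow> wt x x P = x ^ card (Arc P)"
proof -
  assume P: "P \<in> set_partitions n"
  have "Cov P \<subseteq> Arc P" by (auto simp: Cov_def)
  moreover have "finite (Arc P)" using Arc_finite[OF P] .
  ultimately have "card (Arc P - Cov P) + card (Cov P) = card (Arc P)"
    by (metis card_Diff_subset card_mono le_add_diff_inverse2 finite_subset)
  then show ?thesis by (metis wt_def power_add)
qed

lemma card_Arc_insP:
  assumes Q: "Q \<in> set_partitions n" and B: "B \<in> Q"
  shows "card (Arc (insP n Q B)) = Suc (card (Arc Q))"
  using Arc_insP[OF Q B] Arc_insP_new[OF Q] Arc_finite[OF Q] by simp

lemma rank_sum: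
  fixes g :: "'b \<Rightarrow> nat"
  assumes V: "finite V" and g: "inj_on g V"
  shows "(\<Sum>B\<in>V. h (card {C\<in>V. g C < g B})) = (\<Sum>r<card V. h r)"
proof -
  define rk where "rk B = card {C\<in>V. g C < g B}" for B
  have mono: "rk B < rk B'" if "B \<in> V" "B' \<in> V" "g B < g B'" for B B'
  proof -
    have "{C\<in>V. g C < g B} \<subset> {C\<in>V. g C < g B'}" using that by auto
    then show ?thesis unfolding rk_def by (intro psubset_card_mono) (use V in auto)
  qed
  have inj: "inj_on rk V"
  proof (rule inj_onI)
    fix B B' assume "B \<in> V" "B' \<in> V" "rk B = rk B'"
    then show "B = B'" using mono g[THEN inj_onD] by (metis less_irrefl nat_neq_iff)
  qed
  have sub: "rk ` V \<subseteq> {..<card V}"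
  proof
    fix r assume "r \<in> rk ` V"
    then obtain B where B: "B \<in> V" "r = rk B" by auto
    have "{C\<in>V. g C < g B} \<subset> V" using B by auto
    then show "r \<in> {..<card V}" using B V unfolding rk_def by (auto intro: psubset_card_mono)
  qed
  have eq: "rk ` V = {..<card V}"
    by (rule card_subset_eq[OF finite_lessThan sub]) (simp add: card_image[OF inj])
  have "(\<Sum>B\<in>V. h (rk B)) = (\<Sum>r\<in>rk ` V. h r)" by (simp add: sum.reindex[OF inj])
  then show ?thesis using eq unfolding rk_def by simp
qed

definition covered :: "nat set set \<Rightarrow> nat \<Rightarrow> bool" where
  "covered Q m \<longleftrightarrow> (\<exists>i k. (i, k) \<in> Arc Q \<and> i < m \<and> m < k)"

definition vis :: "nat set set \<Rightarrow> nat set set" where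
  "vis Q = {B\<in>Q. \<not> covered Q (Max B)}"

lemma nc_newP: "Q \<in> set_partitions n \<Longrightarrow> noncrossing (newP n Q) \<longleftrightarrow> noncrossing Q"
  by (simp add: noncrossing_def Arc_newP)

lemma nc_insP:
  assumes Q: "Q \<in> set_partitions n" and B: "B \<in> Q"
  shows "noncrossing (insP n Q B) \<longleftrightarrow> noncrossing Q \<and> \<not> covered Q (Max B)"
proof -
  have sub: "\<And>a b. (a, b) \<in> Arc Q \<Longrightarrow> b \<le> n \<and> a \<le> n" using Arc_sub[OF Q] by auto
  let ?m = "Max B"
  show ?thesis
  proof
    assume nc: "noncrossing (insP n Q B)"
    have "noncrossing Q"
      using nc unfolding noncrossing_def Arc_insP[OF Q B] by blast
    moreover have "\<not> covered Q ?m"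
    proof
      assume "covered Q ?m"
      then obtain i k where "(i, k) \<in> Arc Q" "i < ?m" "?m < k" by (auto simp: covered_def)
      moreover have "k < Suc n" using sub[OF \<open>(i, k) \<in> Arc Q\<close>] by auto
      ultimately show False using nc unfolding noncrossing_def Arc_insP[OF Q B] by blast
    qed
    ultimately show "noncrossing Q \<and> \<not> covered Q ?m" by simp
  next
    assume h: "noncrossing Q \<and> \<not> covered Q ?m"
    show "noncrossing (insP n Q B)"
      unfolding noncrossing_def Arc_insP[OF Q B]
    proof (clarify)
      fix i j k l assume ijkl: "i < j" "j < k" "k < l" and a1: "(i, k) \<in> insert (?m, Suc n) (Arc Q)"
        and a2: "(j, l) \<in> insert (?m, Suc n) (Arc Q)"
      show False
      proof (cases "(j, l) = (?m, Suc n)")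
        case True
        then have "(i, k) \<in> Arc Q" using a1 ijkl by auto
        then have "covered Q ?m" using True ijkl by (auto simp: covered_def)
        then show False using h by simp
      next
        case False
        then have jl: "(j, l) \<in> Arc Q" using a2 by auto
        then have "l \<le> n" using sub by blast
        then have "(i, k) \<in> Arc Q" using a1 ijkl by auto
        then show False using h jl ijkl unfolding noncrossing_def by blast
      qed
    qed
  qed
qed

lemma covered_newP: "Q \<in> set_partitions n \<Longrightarrow> covered (newP n Q) m \<longleftrightarrow> covered Q m"
  by (simp add: covered_def Arc_newP)

lemma covered_insP:
  assumes Q: "Q \<in> set_partitions n" and B: "B \<in> Q"
  shows "covered (insP n Q B) m \<longleftrightarrow> covered Q m \<or> (Max B < m \<and> m < Suc n)"
  unfolding covered_def Arc_insP[OF Q B] by auto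

lemma not_covered_top: "Q \<in> set_partitions n \<Longrightarrow> n \<le> m \<Longrightarrow> \<not> covered Q m"
  using Arc_sub by (fastforce simp: covered_def)

lemma Max_inj:
  assumes Q: "Q \<in> set_partitions n" and B: "B \<in> Q" and C: "C \<in> Q" and e: "Max B = Max C"
  shows "B = C"
  using sp_disj[OF Q B C, of "Max B"] block_Max(1)[OF Q B] block_Max(1)[OF Q C] e by simp

lemma Max_inj_on: "Q \<in> set_partitions n \<Longrightarrow> V \<subseteq> Q \<Longrightarrow> inj_on Max V"
  by (meson Max_inj inj_onI subsetD)

lemma Max_ins_block:
  assumes Q: "Q \<in> set_partitions n" and B: "B \<in> Q"
  shows "Max (insert (Suc n) B) = Suc n"
proof -
  have a: "Max B \<le> n" using block_Max(2)[OF Q B] .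
  have "Max (insert (Suc n) B) = max (Suc n) (Max B)" using sp_block(2,3)[OF Q B] by simp
  also have "\<dots> = Suc n" by (rule max.absorb1) (use a in linarith)
  finally show ?thesis .
qed

lemma single_notin: "Q \<in> set_partitions n \<Longrightarrow> {Suc n} \<notin> Q"
  using sp_block(1) by fastforce

lemma insblock_notin: "Q \<in> set_partitions n \<Longrightarrow> insert (Suc n) B \<notin> Q"
  using sp_block(1) by fastforce

lemma vis_newP:
  assumes Q: "Q \<in> set_partitions n"
  shows "vis (newP n Q) = insert {Suc n} (vis Q)"
  using not_covered_top[OF Q, of "Suc n"] by (auto simp: vis_def newP_def covered_newP[OF Q, unfolded newP_def])

lemma vis_insP:
  assumes Q: "Q \<in> set_partitions n" and B: "B \<in> vis Q"
  shows "vis (insP n Q B) = insert (insert (Suc n) B) {C\<in>vis Q. Max C < Max B}"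
proof -
  have BQ: "B \<in> Q" using B by (simp add: vis_def)
  have cov: "\<And>m. covered (insP n Q B) m \<longleftrightarrow> covered Q m \<or> (Max B < m \<and> m < Suc n)"
    by (rule covered_insP[OF Q BQ])
  have top: "\<not> covered (insP n Q B) (Suc n)" using cov not_covered_top[OF Q, of "Suc n"] by auto
  have MC: "\<And>C. C \<in> Q \<Longrightarrow> Max C < Suc n" using block_Max(2)[OF Q] by (simp add: le_imp_less_Suc)
  have ne: "\<And>C. C \<in> Q \<Longrightarrow> C \<noteq> B \<Longrightarrow> Max C \<noteq> Max B" using Max_inj[OF Q _ BQ] by blast
  show ?thesis
  proof
    show "vis (insP n Q B) \<subseteq> insert (insert (Suc n) B) {C\<in>vis Q. Max C < Max B}"
    proof
      fix C assume C: "C \<in> vis (insP n Q B)"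
      show "C \<in> insert (insert (Suc n) B) {C\<in>vis Q. Max C < Max B}"
      proof (cases "C = insert (Suc n) B")
        case False
        then have CQ: "C \<in> Q" "C \<noteq> B" using C by (auto simp: vis_def insP_def)
        have "\<not> covered (insP n Q B) (Max C)" using C by (simp add: vis_def)
        then have "\<not> covered Q (Max C)" "\<not> Max B < Max C" using cov MC[OF CQ(1)] by auto
        then show ?thesis using CQ ne[OF CQ] by (auto simp: vis_def)
      qed simp
    qed
    show "insert (insert (Suc n) B) {C\<in>vis Q. Max C < Max B} \<subseteq> vis (insP n Q B)"
    proof
      fix C assume C: "C \<in> insert (insert (Suc n) B) {C\<in>vis Q. Max C < Max B}"
      show "C \<in> vis (insP n Q B)"
      proof (cases "C = insert (Suc n) B")
        case True
        then show ?thesis using top Max_ins_block[OF Q BQ] by (simp add: vis_def insP_def)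
      next
        case False
        then have CQ: "C \<in> Q" "\<not> covered Q (Max C)" "Max C < Max B" using C by (auto simp: vis_def)
        then have "C \<noteq> B" by auto
        then show ?thesis using CQ cov by (auto simp: vis_def insP_def)
      qed
    qed
  qed
qed

lemma sp_0: "set_partitions 0 = {{}}"
  by (auto simp: set_partitions_def partition_on_empty)

lemma Arc_empty: "Arc {} = {}" by (simp add: Arc_def)

lemma wt_empty: "wt x y {} = 1" by (simp add: wt_def Arc_empty Cov_def)

lemma card_newP: "Q \<in> set_partitions n \<Longrightarrow> card (newP n Q) = Suc (card Q)"
  using single_notin sp_finite by (simp add: newP_def)

lemma card_insP: "Q \<in> set_partitions n \<Longrightarrow> B \<in> Q \<Longrightarrow> card (insP n Q B) = card Q"
proof -
  assume Q: "Q \<in> set_partitions n" and B: "B \<in> Q"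
  have "card Q > 0" using B sp_finite[OF Q] by (auto simp: card_gt_0_iff)
  then show ?thesis using insblock_notin[OF Q, of B] sp_finite[OF Q] B by (simp add: insP_def)
qed

lemma sp_decomp_filter:
  assumes new: "\<And>Q. Q \<in> set_partitions n \<Longrightarrow> c (newP n Q) \<longleftrightarrow> c' Q"
    and ins: "\<And>Q B. Q \<in> set_partitions n \<Longrightarrow> B \<in> Q \<Longrightarrow> c (insP n Q B) \<longleftrightarrow> c' Q \<and> B \<in> V Q"
    and V: "\<And>Q. Q \<in> set_partitions n \<Longrightarrow> V Q \<subseteq> Q"
  shows "(\<Sum>P\<in>{P\<in>set_partitions (Suc n). c P}. F P) =
    (\<Sum>Q\<in>{Q\<in>set_partitions n. c' Q}. F (newP n Q) + (\<Sum>B\<in>V Q. F (insP n Q B)))"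
proof -
  have "(\<Sum>P\<in>{P\<in>set_partitions (Suc n). c P}. F P) = (\<Sum>P\<in>set_partitions (Suc n). if c P then F P else 0)"
    by (simp add: sum.inter_filter finite_sp)
  also have "\<dots> = (\<Sum>Q\<in>set_partitions n. (if c (newP n Q) then F (newP n Q) else 0) +
      (\<Sum>B\<in>Q. if c (insP n Q B) then F (insP n Q B) else 0))"
    by (rule sp_decomp)
  also have "\<dots> = (\<Sum>Q\<in>set_partitions n. if c' Q then F (newP n Q) + (\<Sum>B\<in>V Q. F (insP n Q B)) else 0)"
  proof (rule sum.cong[OF refl])
    fix Q assume Q: "Q \<in> set_partitions n"
    have fQ: "finite Q" using sp_finite[OF Q] .
    have "(\<Sum>B\<in>Q. if c (insP n Q B) then F (insP n Q B) else 0) = (\<Sum>B\<in>Q. if c' Q \<and> B \<in> V Q then F (insP n Q B) else 0)"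
      using ins[OF Q] by (intro sum.cong) auto
    also have "\<dots> = (if c' Q then (\<Sum>B\<in>V Q. F (insP n Q B)) else 0)"
    proof (cases "c' Q")
      case True
      have "(\<Sum>B\<in>Q. if B \<in> V Q then F (insP n Q B) else 0) = (\<Sum>B\<in>Q \<inter> V Q. F (insP n Q B))"
        using fQ by (simp add: sum.inter_restrict)
      also have "Q \<inter> V Q = V Q" using V[OF Q] by auto
      finally show ?thesis using True by simp
    qed simp
    finally show "(if c (newP n Q) then F (newP n Q) else 0) + (\<Sum>B\<in>Q. if c (insP n Q B) then F (insP n Q B) else 0)
      = (if c' Q then F (newP n Q) + (\<Sum>B\<in>V Q. F (insP n Q B)) else 0)"
      using new[OF Q] by simp
  qed
  also have "\<dots> = (\<Sum>Q\<in>{Q\<in>set_partitions n. c' Q}. F (newP n Q) + (\<Sum>B\<in>V Q. F (insP n Q B)))"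
    by (simp add: sum.inter_filter finite_sp)
  finally show ?thesis .
qed

lemma recB:
  "(\<Sum>P\<in>set_partitions (Suc n). wt x y P * f (card P)) =
   (\<Sum>Q\<in>set_partitions n. wt x y Q * (f (Suc (card Q)) + (\<Sum>B\<in>Q. if Max B = n then y else x) * f (card Q)))"
proof -
  have "(\<Sum>P\<in>set_partitions (Suc n). wt x y P * f (card P)) =
    (\<Sum>Q\<in>set_partitions n. wt x y (newP n Q) * f (card (newP n Q)) + (\<Sum>B\<in>Q. wt x y (insP n Q B) * f (card (insP n Q B))))"
    by (rule sp_decomp)
  also have "\<dots> = (\<Sum>Q\<in>set_partitions n. wt x y Q * (f (Suc (card Q)) + (\<Sum>B\<in>Q. if Max B = n then y else x) * f (card Q)))"
  proof (rule sum.cong[OF refl])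
    fix Q assume Q: "Q \<in> set_partitions n"
    have "(\<Sum>B\<in>Q. wt x y (insP n Q B) * f (card (insP n Q B))) = (\<Sum>B\<in>Q. wt x y Q * ((if Max B = n then y else x) * f (card Q)))"
      by (rule sum.cong[OF refl]) (simp add: wt_insP[OF Q] card_insP[OF Q] mult_ac)
    also have "\<dots> = wt x y Q * ((\<Sum>B\<in>Q. if Max B = n then y else x) * f (card Q))"
      by (simp add: sum_distrib_left sum_distrib_right)
    finally show "wt x y (newP n Q) * f (card (newP n Q)) + (\<Sum>B\<in>Q. wt x y (insP n Q B) * f (card (insP n Q B))) =
      wt x y Q * (f (Suc (card Q)) + (\<Sum>B\<in>Q. if Max B = n then y else x) * f (card Q))"
      by (simp add: wt_newP[OF Q] card_newP[OF Q] distrib_left)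
  qed
  finally show ?thesis .
qed

lemma top_block:
  assumes Q: "Q \<in> set_partitions n" and n: "1 \<le> n"
  obtains T where "T \<in> Q" "Max T = n"
proof -
  obtain T where T: "T \<in> Q" "n \<in> T" using sp_cover[OF Q, of n] n by auto
  then have "Max T = n" using block_Max[OF Q T(1)] by (meson antisym)
  then show ?thesis using T that by blast
qed

lemma top_sum:
  fixes x y :: "'a::comm_ring_1"
  assumes Q: "Q \<in> set_partitions n" and n: "1 \<le> n" and V: "V \<subseteq> Q"
    and T: "T \<in> V" "Max T = n"
  shows "(\<Sum>B\<in>V. (if Max B = n then y else x) * G (card {C\<in>V. Max C < Max B})) =
    y * G (card V - 1) + x * (\<Sum>r<card V - 1. G r)"
proof -
  have fV: "finite V" using sp_finite[OF Q] V finite_subset by blast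
  have inj: "inj_on Max V" using Max_inj_on[OF Q V] .
  have iff: "Max B = n \<longleftrightarrow> card {C\<in>V. Max C < Max B} = card V - 1" if B: "B \<in> V" for B
  proof
    assume "Max B = n"
    then have "B = T" using inj T B by (auto dest: inj_onD)
    have "{C\<in>V. Max C < Max B} = V - {B}"
    proof
      show "{C\<in>V. Max C < Max B} \<subseteq> V - {B}" by auto
      show "V - {B} \<subseteq> {C\<in>V. Max C < Max B}"
      proof
        fix C assume C: "C \<in> V - {B}"
        then have "Max C \<le> n" "Max C \<noteq> Max B" using block_Max(2)[OF Q] V inj B by (auto dest: inj_onD)
        then show "C \<in> {C\<in>V. Max C < Max B}" using C \<open>Max B = n\<close> by auto
      qed
    qed
    then show "card {C\<in>V. Max C < Max B} = card V - 1" using fV B by simp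
  next
    assume c: "card {C\<in>V. Max C < Max B} = card V - 1"
    show "Max B = n"
    proof (rule ccontr)
      assume "Max B \<noteq> n"
      then have "Max B < n" using block_Max(2)[OF Q] V B by fastforce
      then have "{C\<in>V. Max C < Max B} \<subseteq> V - {B, T}" using T by auto
      then have "card {C\<in>V. Max C < Max B} \<le> card (V - {B, T})" using fV by (intro card_mono) auto
      also have "\<dots> = card V - 2"
      proof -
        have "B \<noteq> T" using T \<open>Max B < n\<close> by auto
        then have "card {B, T} = 2" by simp
        moreover have "{B, T} \<subseteq> V" using B T by auto
        ultimately show ?thesis using fV by (simp add: card_Diff_subset)
      qed
      finally have le: "card {C\<in>V. Max C < Max B} \<le> card V - 2" .
      have "B \<noteq> T" using T \<open>Max B < n\<close> by auto
      then have "card {B, T} = 2" by simp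
      moreover have "card {B, T} \<le> card V" using B T fV by (intro card_mono) auto
      ultimately show False using le c by linarith
    qed
  qed
  have "(\<Sum>B\<in>V. (if Max B = n then y else x) * G (card {C\<in>V. Max C < Max B})) =
     (\<Sum>B\<in>V. (\<lambda>r. (if r = card V - 1 then y else x) * G r) (card {C\<in>V. Max C < Max B}))"
    using iff by (intro sum.cong) auto
  also have "\<dots> = (\<Sum>r<card V. (if r = card V - 1 then y else x) * G r)"
    by (rule rank_sum[OF fV inj])
  also have "\<dots> = y * G (card V - 1) + x * (\<Sum>r<card V - 1. G r)"
  proof -
    have "card V \<noteq> 0" using fV T by auto
    then obtain c where c: "card V = Suc c" by (metis not0_implies_Suc)
    have "(\<Sum>r<Suc c. (if r = c then y else x) * G r) = y * G c + (\<Sum>r<c. x * G r)"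
      by (simp add: add.commute)
    also have "(\<Sum>r<c. x * G r) = x * (\<Sum>r<c. G r)" by (rule sum_distrib_left[symmetric])
    finally show ?thesis unfolding c by simp
  qed
  finally show ?thesis .
qed

lemma pascal_sum:
  fixes y :: "'a::comm_ring_1" and A :: "nat \<Rightarrow> 'a"
  shows "(\<Sum>j\<le>n. of_nat (n choose j) * y ^ (n - j) * (A (Suc j) + y * A j)) =
         (\<Sum>j\<le>Suc n. of_nat (Suc n choose j) * y ^ (Suc n - j) * A j)"
proof -
  have s1: "(\<Sum>j\<le>n. of_nat (n choose j) * y ^ (n - j) * (y * A j)) =
      (\<Sum>j\<le>Suc n. of_nat (n choose j) * y ^ (Suc n - j) * A j)"
  proof -
    have "(\<Sum>j\<le>Suc n. of_nat (n choose j) * y ^ (Suc n - j) * A j) =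
        (\<Sum>j\<le>n. of_nat (n choose j) * y ^ (Suc n - j) * A j)"
      by (simp add: binomial_eq_0)
    also have "\<dots> = (\<Sum>j\<le>n. of_nat (n choose j) * y ^ (n - j) * (y * A j))"
      by (rule sum.cong[OF refl]) (simp add: Suc_diff_le mult_ac)
    finally show ?thesis by simp
  qed
  have s2: "(\<Sum>j\<le>Suc n. of_nat (n choose j) * y ^ (Suc n - j) * A j) =
      y ^ Suc n * A 0 + (\<Sum>j\<le>n. of_nat (n choose Suc j) * y ^ (n - j) * A (Suc j))"
    by (subst sum.atMost_Suc_shift) simp
  have s3: "(\<Sum>j\<le>Suc n. of_nat (Suc n choose j) * y ^ (Suc n - j) * A j) =
      y ^ Suc n * A 0 + (\<Sum>j\<le>n. (of_nat (n choose j) + of_nat (n choose Suc j)) * y ^ (n - j) * A (Suc j))"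
    by (subst sum.atMost_Suc_shift) simp
  have "(\<Sum>j\<le>n. of_nat (n choose j) * y ^ (n - j) * (A (Suc j) + y * A j)) =
      (\<Sum>j\<le>n. of_nat (n choose j) * y ^ (n - j) * A (Suc j)) + (\<Sum>j\<le>n. of_nat (n choose j) * y ^ (n - j) * (y * A j))"
    by (simp add: distrib_left sum.distrib)
  also have "\<dots> = (\<Sum>j\<le>Suc n. of_nat (Suc n choose j) * y ^ (Suc n - j) * A j)"
    unfolding s1 s2 s3 by (simp add: distrib_right sum.distrib)
  finally show ?thesis .
qed

lemma sum_const_if_top:
  fixes x y :: "'a::comm_ring_1"
  assumes Q: "Q \<in> set_partitions n" and n: "1 \<le> n"
  shows "(\<Sum>B\<in>Q. if Max B = n then y else x) = y + of_nat (card Q - 1) * x"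
proof -
  obtain T where T: "T \<in> Q" "Max T = n" using top_block[OF Q n] by blast
  have "(\<Sum>B\<in>Q. (if Max B = n then y else x) * (\<lambda>_. 1) (card {C\<in>Q. Max C < Max B})) =
    y * 1 + x * (\<Sum>r<card Q - 1. 1)"
    by (rule top_sum[OF Q n subset_refl T])
  then show ?thesis by (simp add: mult_ac)
qed

lemma B_claim:
  fixes x y :: "'a::comm_ring_1"
  shows "\<forall>f. (\<Sum>P\<in>set_partitions (Suc n). wt x y P * f (card P)) =
     (\<Sum>j\<le>n. of_nat (n choose j) * y ^ (n - j) * (\<Sum>P\<in>set_partitions j. wt x x P * f (Suc (card P))))"
proof (induction n)
  case 0
  show ?case by (simp add: recB sp_0 wt_empty)
next
  case (Suc n)
  show ?case
  proof
    fix f :: "nat \<Rightarrow> 'a"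
    define A where "A j = (\<Sum>P\<in>set_partitions j. wt x x P * f (Suc (card P)))" for j
    define g where "g k = f (Suc k) + (y + of_nat (k - 1) * x) * f k" for k
    have "(\<Sum>P\<in>set_partitions (Suc (Suc n)). wt x y P * f (card P)) =
      (\<Sum>Q\<in>set_partitions (Suc n). wt x y Q * g (card Q))"
      by (subst recB, rule sum.cong[OF refl]) (simp add: sum_const_if_top g_def)
    also have "\<dots> = (\<Sum>j\<le>n. of_nat (n choose j) * y ^ (n - j) * (\<Sum>P\<in>set_partitions j. wt x x P * g (Suc (card P))))"
      using Suc.IH by simp
    also have "\<dots> = (\<Sum>j\<le>n. of_nat (n choose j) * y ^ (n - j) * (A (Suc j) + y * A j))"
    proof (rule sum.cong[OF refl])
      fix j assume "j \<in> {..n}"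
      have "A (Suc j) = (\<Sum>P\<in>set_partitions j. wt x x P * (f (Suc (Suc (card P))) + of_nat (card P) * x * f (Suc (card P))))"
        unfolding A_def using recB[where n=j and x=x and y=x and f="\<lambda>k. f (Suc k)"] by (simp add: mult_ac)
      then have "(\<Sum>P\<in>set_partitions j. wt x x P * g (Suc (card P))) = A (Suc j) + y * A j"
        unfolding A_def g_def by (simp add: sum.distrib sum_distrib_left distrib_left distrib_right mult_ac)
      then show "of_nat (n choose j) * y ^ (n - j) * (\<Sum>P\<in>set_partitions j. wt x x P * g (Suc (card P))) =
          of_nat (n choose j) * y ^ (n - j) * (A (Suc j) + y * A j)" by simp
    qed
    also have "\<dots> = (\<Sum>j\<le>Suc n. of_nat (Suc n choose j) * y ^ (Suc n - j) * A j)"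
      by (rule pascal_sum)
    finally show "(\<Sum>P\<in>set_partitions (Suc (Suc n)). wt x y P * f (card P)) =
      (\<Sum>j\<le>Suc n. of_nat (Suc n choose j) * y ^ (Suc n - j) * (\<Sum>P\<in>set_partitions j. wt x x P * f (Suc (card P))))"
      unfolding A_def .
  qed
qed

definition vsing :: "nat set set \<Rightarrow> nat set set" where
  "vsing Q = {B\<in>vis Q. card B = 1}"

definition PNC :: "nat \<Rightarrow> nat set set set" where
  "PNC n = {P\<in>set_partitions n. noncrossing P \<and> poor P}"

lemma vis_sub: "vis Q \<subseteq> Q" by (auto simp: vis_def)
lemma vsing_sub: "vsing Q \<subseteq> vis Q" by (auto simp: vsing_def)

lemma vis_finite: "Q \<in> set_partitions n \<Longrightarrow> finite (vis Q)"
  by (rule finite_subset[OF vis_sub sp_finite])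

lemma vsing_finite: "Q \<in> set_partitions n \<Longrightarrow> finite (vsing Q)"
  by (rule finite_subset[OF vsing_sub vis_finite])

lemma card_vis_newP: "Q \<in> set_partitions n \<Longrightarrow> card (vis (newP n Q)) = Suc (card (vis Q))"
proof -
  assume Q: "Q \<in> set_partitions n"
  have "{Suc n} \<notin> vis Q" using single_notin[OF Q] vis_sub by blast
  then show ?thesis using vis_newP[OF Q] vis_finite[OF Q] by simp
qed

lemma card_vis_insP:
  assumes Q: "Q \<in> set_partitions n" and B: "B \<in> vis Q"
  shows "card (vis (insP n Q B)) = Suc (card {C\<in>vis Q. Max C < Max B})"
proof -
  have "insert (Suc n) B \<notin> {C\<in>vis Q. Max C < Max B}" using insblock_notin[OF Q, of B] vis_sub by blast
  moreover have "finite {C\<in>vis Q. Max C < Max B}" using vis_finite[OF Q] by simp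
  ultimately show ?thesis by (simp add: vis_insP[OF Q B])
qed

lemma NC_eq: "NC n = {P\<in>set_partitions n. noncrossing P}" by (simp add: NC_def)

lemma nc_empty: "noncrossing {}" by (simp add: noncrossing_def Arc_empty)

lemma NC_0: "NC 0 = {{}}" using nc_empty by (auto simp: NC_def sp_0)

lemma PNC_0: "PNC 0 = {{}}" using nc_empty by (auto simp: PNC_def sp_0 poor_def)

lemma vis_empty: "vis {} = {}" by (simp add: vis_def)
lemma vsing_empty: "vsing {} = {}" by (simp add: vsing_def vis_empty)

lemma recNC:
  fixes x y :: "'a::comm_ring_1"
  shows "(\<Sum>P\<in>NC (Suc n). wt x y P * f (card (vis P))) =
   (\<Sum>Q\<in>NC n. wt x y Q * (f (Suc (card (vis Q))) +
      (\<Sum>B\<in>vis Q. (if Max B = n then y else x) * f (Suc (card {C\<in>vis Q. Max C < Max B})))))"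
proof -
  have "(\<Sum>P\<in>NC (Suc n). wt x y P * f (card (vis P))) =
    (\<Sum>Q\<in>NC n. wt x y (newP n Q) * f (card (vis (newP n Q))) + (\<Sum>B\<in>vis Q. wt x y (insP n Q B) * f (card (vis (insP n Q B)))))"
    unfolding NC_eq
    by (rule sp_decomp_filter) (simp_all add: nc_newP nc_insP vis_def)
  also have "\<dots> = (\<Sum>Q\<in>NC n. wt x y Q * (f (Suc (card (vis Q))) +
      (\<Sum>B\<in>vis Q. (if Max B = n then y else x) * f (Suc (card {C\<in>vis Q. Max C < Max B})))))"
  proof (rule sum.cong[OF refl])
    fix Q assume "Q \<in> NC n"
    then have Q: "Q \<in> set_partitions n" by (simp add: NC_def)
    have "(\<Sum>B\<in>vis Q. wt x y (insP n Q B) * f (card (vis (insP n Q B)))) =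
      (\<Sum>B\<in>vis Q. wt x y Q * ((if Max B = n then y else x) * f (Suc (card {C\<in>vis Q. Max C < Max B}))))"
    proof (rule sum.cong[OF refl])
      fix B assume B: "B \<in> vis Q"
      then have BQ: "B \<in> Q" using vis_sub by blast
      show "wt x y (insP n Q B) * f (card (vis (insP n Q B))) =
        wt x y Q * ((if Max B = n then y else x) * f (Suc (card {C\<in>vis Q. Max C < Max B})))"
        by (simp only: wt_insP[OF Q BQ] card_vis_insP[OF Q B] mult_ac)
    qed
    then show "wt x y (newP n Q) * f (card (vis (newP n Q))) + (\<Sum>B\<in>vis Q. wt x y (insP n Q B) * f (card (vis (insP n Q B)))) =
      wt x y Q * (f (Suc (card (vis Q))) +
      (\<Sum>B\<in>vis Q. (if Max B = n then y else x) * f (Suc (card {C\<in>vis Q. Max C < Max B}))))"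
      by (simp add: wt_newP[OF Q] card_vis_newP[OF Q] distrib_left sum_distrib_left)
  qed
  finally show ?thesis .
qed

lemma poor_newP: "Q \<in> set_partitions n \<Longrightarrow> poor (newP n Q) \<longleftrightarrow> poor Q"
  by (simp add: poor_def newP_def)

lemma poor_insP:
  assumes Q: "Q \<in> set_partitions n" and B: "B \<in> Q"
  shows "poor (insP n Q B) \<longleftrightarrow> poor Q \<and> card B = 1"
proof -
  have nB: "Suc n \<notin> B" using sp_block(1)[OF Q B] by auto
  have cB: "card (insert (Suc n) B) = Suc (card B)" using nB sp_block(3)[OF Q B] by simp
  have pB: "card B \<ge> 1" using sp_block(2,3)[OF Q B] by (simp add: Suc_leI card_gt_0_iff)
  show ?thesis
  proof
    assume p: "poor (insP n Q B)"
    then have "card B = 1" using cB pB by (auto simp: poor_def insP_def)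
    moreover have "poor Q"
      unfolding poor_def
    proof
      fix C assume "C \<in> Q"
      then show "card C \<le> 2" using p \<open>card B = 1\<close> by (cases "C = B") (auto simp: poor_def insP_def)
    qed
    ultimately show "poor Q \<and> card B = 1" by simp
  next
    assume "poor Q \<and> card B = 1"
    then show "poor (insP n Q B)" using cB by (auto simp: poor_def insP_def)
  qed
qed

lemma vsing_newP: "Q \<in> set_partitions n \<Longrightarrow> vsing (newP n Q) = insert {Suc n} (vsing Q)"
  by (auto simp: vsing_def vis_newP)

lemma vsing_insP:
  assumes Q: "Q \<in> set_partitions n" and B: "B \<in> vis Q"
  shows "vsing (insP n Q B) = {C\<in>vsing Q. Max C < Max B}"
proof -
  have BQ: "B \<in> Q" using B vis_sub by auto
  have "card (insert (Suc n) B) \<noteq> 1"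
  proof -
    have nB: "Suc n \<notin> B" using sp_block(1)[OF Q BQ] by auto
    have "card B > 0" using sp_block(2,3)[OF Q BQ] by (simp add: card_gt_0_iff)
    then show ?thesis using nB sp_block(2,3)[OF Q BQ] by simp
  qed
  then show ?thesis by (auto simp: vsing_def vis_insP[OF Q B])
qed

lemma recMo:
  fixes x :: "'a::comm_ring_1"
  shows "(\<Sum>P\<in>PNC (Suc n). x ^ card (Arc P) * h (card (vsing P))) =
   (\<Sum>Q\<in>PNC n. x ^ card (Arc Q) * (h (Suc (card (vsing Q))) + x * (\<Sum>r<card (vsing Q). h r)))"
proof -
  have "(\<Sum>P\<in>PNC (Suc n). x ^ card (Arc P) * h (card (vsing P))) =
    (\<Sum>Q\<in>PNC n. x ^ card (Arc (newP n Q)) * h (card (vsing (newP n Q))) + (\<Sum>B\<in>vsing Q. x ^ card (Arc (insP n Q B)) * h (card (vsing (insP n Q B)))))"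
    unfolding PNC_def
    by (rule sp_decomp_filter) (simp_all add: nc_newP nc_insP poor_newP poor_insP vsing_def vis_def conj_ac)
  also have "\<dots> = (\<Sum>Q\<in>PNC n. x ^ card (Arc Q) * (h (Suc (card (vsing Q))) + x * (\<Sum>r<card (vsing Q). h r)))"
  proof (rule sum.cong[OF refl])
    fix Q assume "Q \<in> PNC n"
    then have Q: "Q \<in> set_partitions n" by (simp add: PNC_def)
    have sub: "vsing Q \<subseteq> Q" using vis_sub vsing_sub by blast
    have "(\<Sum>B\<in>vsing Q. x ^ card (Arc (insP n Q B)) * h (card (vsing (insP n Q B)))) =
      (\<Sum>B\<in>vsing Q. x * x ^ card (Arc Q) * h (card {C\<in>vsing Q. Max C < Max B}))"
    proof (rule sum.cong[OF refl])
      fix B assume B: "B \<in> vsing Q"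
      then have BV: "B \<in> vis Q" using vsing_sub by blast
      then have BQ: "B \<in> Q" using vis_sub by blast
      show "x ^ card (Arc (insP n Q B)) * h (card (vsing (insP n Q B))) =
        x * x ^ card (Arc Q) * h (card {C\<in>vsing Q. Max C < Max B})"
        by (simp only: card_Arc_insP[OF Q BQ] vsing_insP[OF Q BV] power_Suc)
    qed
    also have "\<dots> = x * x ^ card (Arc Q) * (\<Sum>B\<in>vsing Q. h (card {C\<in>vsing Q. Max C < Max B}))"
      by (simp add: sum_distrib_left)
    also have "\<dots> = x * x ^ card (Arc Q) * (\<Sum>r<card (vsing Q). h r)"
      using rank_sum[OF vsing_finite[OF Q] Max_inj_on[OF Q sub], where h=h] by simp
    finally have "(\<Sum>B\<in>vsing Q. x ^ card (Arc (insP n Q B)) * h (card (vsing (insP n Q B)))) = x * x ^ card (Arc Q) * (\<Sum>r<card (vsing Q). h r)" .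
    then show "x ^ card (Arc (newP n Q)) * h (card (vsing (newP n Q))) + (\<Sum>B\<in>vsing Q. x ^ card (Arc (insP n Q B)) * h (card (vsing (insP n Q B)))) =
      x ^ card (Arc Q) * (h (Suc (card (vsing Q))) + x * (\<Sum>r<card (vsing Q). h r))"
    proof -
      have "{Suc n} \<notin> vsing Q" using sub single_notin[OF Q] by blast
      then have c: "card (vsing (newP n Q)) = Suc (card (vsing Q))"
        using vsing_finite[OF Q] by (simp add: vsing_newP[OF Q])
      assume e: "(\<Sum>B\<in>vsing Q. x ^ card (Arc (insP n Q B)) * h (card (vsing (insP n Q B)))) = x * x ^ card (Arc Q) * (\<Sum>r<card (vsing Q). h r)"
      show ?thesis using e by (simp add: c Arc_newP[OF Q] distrib_left mult_ac)
    qed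
  qed
  finally show ?thesis .
qed




lemma NC_claim:
  fixes x y :: "'a::comm_ring_1"
  shows "\<forall>f. (\<Sum>P\<in>NC (Suc n). wt x y P * f (card (vis P))) =
     (\<Sum>j\<le>n. of_nat (n choose j) * y ^ (n - j) * (\<Sum>P\<in>PNC j. x ^ card (Arc P) * f (Suc (card (vsing P)))))"
proof (induction n)
  case 0
  show ?case by (simp add: recNC NC_0 PNC_0 wt_empty vis_empty vsing_empty Arc_empty)
next
  case (Suc n)
  show ?case
  proof
    fix f :: "nat \<Rightarrow> 'a"
    define A where "A j = (\<Sum>P\<in>PNC j. x ^ card (Arc P) * f (Suc (card (vsing P))))" for j
    define g where "g v = f (Suc v) + y * f v + x * (\<Sum>r<v - 1. f (Suc r))" for v
    have "(\<Sum>P\<in>NC (Suc (Suc n)). wt x y P * f (card (vis P))) =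
      (\<Sum>Q\<in>NC (Suc n). wt x y Q * g (card (vis Q)))"
    proof (subst recNC, rule sum.cong[OF refl])
      fix Q assume "Q \<in> NC (Suc n)"
      then have Q: "Q \<in> set_partitions (Suc n)" by (simp add: NC_def)
      obtain T where T: "T \<in> Q" "Max T = Suc n" using top_block[OF Q] by auto
      have TV: "T \<in> vis Q" using T not_covered_top[OF Q] by (simp add: vis_def)
      have cv: "card (vis Q) \<ge> 1" using TV vis_finite[OF Q] by (metis One_nat_def Suc_leI card_gt_0_iff empty_iff)
      have "(\<Sum>B\<in>vis Q. (if Max B = Suc n then y else x) * (\<lambda>k. f (Suc k)) (card {C\<in>vis Q. Max C < Max B})) =
        y * f (Suc (card (vis Q) - 1)) + x * (\<Sum>r<card (vis Q) - 1. f (Suc r))"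
        by (rule top_sum[OF Q _ vis_sub TV T(2)]) simp
      then show "wt x y Q * (f (Suc (card (vis Q))) +
        (\<Sum>B\<in>vis Q. (if Max B = Suc n then y else x) * f (Suc (card {C\<in>vis Q. Max C < Max B})))) =
        wt x y Q * g (card (vis Q))"
        using cv by (simp add: g_def add.assoc)
    qed
    also have "\<dots> = (\<Sum>j\<le>n. of_nat (n choose j) * y ^ (n - j) * (\<Sum>P\<in>PNC j. x ^ card (Arc P) * g (Suc (card (vsing P)))))"
      using Suc.IH by simp
    also have "\<dots> = (\<Sum>j\<le>n. of_nat (n choose j) * y ^ (n - j) * (A (Suc j) + y * A j))"
    proof (rule sum.cong[OF refl])
      fix j assume "j \<in> {..n}"
      have "A (Suc j) = (\<Sum>Q\<in>PNC j. x ^ card (Arc Q) * (f (Suc (Suc (card (vsing Q)))) + x * (\<Sum>r<card (vsing Q). f (Suc r))))"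
        unfolding A_def using recMo[where n=j and x=x and h="\<lambda>k. f (Suc k)"] by simp
      then have "(\<Sum>P\<in>PNC j. x ^ card (Arc P) * g (Suc (card (vsing P)))) = A (Suc j) + y * A j"
        unfolding A_def g_def by (simp add: sum.distrib sum_distrib_left distrib_left mult_ac)
      then show "of_nat (n choose j) * y ^ (n - j) * (\<Sum>P\<in>PNC j. x ^ card (Arc P) * g (Suc (card (vsing P)))) =
          of_nat (n choose j) * y ^ (n - j) * (A (Suc j) + y * A j)" by simp
    qed
    also have "\<dots> = (\<Sum>j\<le>Suc n. of_nat (Suc n choose j) * y ^ (Suc n - j) * A j)"
      by (rule pascal_sum)
    finally show "(\<Sum>P\<in>NC (Suc (Suc n)). wt x y P * f (card (vis P))) =
      (\<Sum>j\<le>Suc n. of_nat (Suc n choose j) * y ^ (Suc n - j) * (\<Sum>P\<in>PNC j. x ^ card (Arc P) * f (Suc (card (vsing P)))))"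
      unfolding A_def .
  qed
qed



lemma binom_conv:
  fixes w u :: "'a::comm_ring_1" and A :: "nat \<Rightarrow> 'a"
  shows "(\<Sum>k\<le>n. of_nat (n choose k) * w ^ (n - k) * (\<Sum>i\<le>k. of_nat (k choose i) * A i * u ^ (k - i))) =
    (\<Sum>i\<le>n. of_nat (n choose i) * A i * (w + u) ^ (n - i))"
proof -
  define F where "F k i = of_nat (n choose k) * w ^ (n - k) * (of_nat (k choose i) * A i * u ^ (k - i))" for k i
  have "(\<Sum>k\<le>n. of_nat (n choose k) * w ^ (n - k) * (\<Sum>i\<le>k. of_nat (k choose i) * A i * u ^ (k - i))) =
      (\<Sum>k\<le>n. \<Sum>i\<in>{i\<in>{..n}. i \<le> k}. F k i)"
  proof (rule sum.cong[OF refl])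
    fix k assume "k \<in> {..n}"
    then have "{i\<in>{..n}. i \<le> k} = {..k}" by auto
    then show "of_nat (n choose k) * w ^ (n - k) * (\<Sum>i\<le>k. of_nat (k choose i) * A i * u ^ (k - i)) =
      (\<Sum>i\<in>{i\<in>{..n}. i \<le> k}. F k i)" by (simp add: F_def sum_distrib_left)
  qed
  also have "\<dots> = (\<Sum>i\<le>n. \<Sum>k\<in>{k\<in>{..n}. k \<ge> i}. F k i)"
    by (rule sum.swap_restrict) auto
  also have "\<dots> = (\<Sum>i\<le>n. of_nat (n choose i) * A i * (w + u) ^ (n - i))"
  proof (rule sum.cong[OF refl])
    fix i assume i: "i \<in> {..n}"
    then have e: "{k\<in>{..n}. k \<ge> i} = {i..n}" by auto
    have "(\<Sum>k\<in>{i..n}. F k i) = (\<Sum>m\<in>{0..n - i}. F (i + m) i)"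
      using i by (subst sum.atLeastAtMost_shift_0) (auto simp: comp_def)
    also have "\<dots> = (\<Sum>m\<le>n - i. of_nat (n choose i) * A i * (of_nat (n - i choose m) * u ^ m * w ^ (n - i - m)))"
    proof (rule sum.cong)
      fix m assume m: "m \<in> {..n - i}"
      then have c: "(n choose (i + m)) * ((i + m) choose i) = (n choose i) * (n - i choose m)"
        using i by (subst choose_mult) auto
      have cR: "of_nat (n choose (i + m)) * of_nat ((i + m) choose i) = (of_nat (n choose i) * of_nat (n - i choose m) :: 'a)"
        by (simp only: of_nat_mult[symmetric] c)
      have "F (i + m) i = (of_nat (n choose (i + m)) * of_nat ((i + m) choose i)) * (A i * u ^ m * w ^ (n - i - m))"
        by (simp add: F_def mult_ac)
      also have "\<dots> = of_nat (n choose i) * A i * (of_nat (n - i choose m) * u ^ m * w ^ (n - i - m))"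
        unfolding cR by (simp add: mult_ac)
      finally show "F (i + m) i = of_nat (n choose i) * A i * (of_nat (n - i choose m) * u ^ m * w ^ (n - i - m))" .
    qed (auto simp: atLeast0AtMost)
    also have "\<dots> = of_nat (n choose i) * A i * (u + w) ^ (n - i)"
      by (simp add: binomial_ring sum_distrib_left)
    finally show "(\<Sum>k\<in>{k\<in>{..n}. k \<ge> i}. F k i) = of_nat (n choose i) * A i * (w + u) ^ (n - i)"
      unfolding e by (simp add: add.commute)
  qed
  finally show ?thesis .
qed



fun Bal :: "nat \<Rightarrow> nat \<Rightarrow> nat" where
  "Bal 0 0 = 1"
| "Bal 0 (Suc h) = Bal 0 h"
| "Bal (Suc j) 0 = Bal j 1"
| "Bal (Suc j) (Suc h) = Bal (Suc j) h + Bal j (Suc (Suc h))"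

lemma Bal_closed: "Bal j h + (if j = 0 then 0 else (2 * j + h) choose (j - 1)) = (2 * j + h) choose j"
proof (induction j h rule: Bal.induct)
  case 1
  then show ?case by simp
next
  case (2 h)
  then show ?case by simp
next
  case (3 j)
  have p1: "((2 * j + 2) choose (j + 1)) = ((2 * j + 1) choose j) + ((2 * j + 1) choose (j + 1))"
    by simp
  have s1: "((2 * j + 1) choose (j + 1)) = ((2 * j + 1) choose j)"
    using binomial_symmetric[of j "2 * j + 1"] by (simp add: numeral_2_eq_2)
  have p2: "((2 * j + 2) choose j) = (if j = 0 then 0 else ((2 * j + 1) choose (j - 1))) + ((2 * j + 1) choose j)"
  proof (cases j)
    case 0 then show ?thesis by simp
  next
    case (Suc j') then show ?thesis by simp
  qed
  show ?case using 3 p1 s1 p2 by (simp add: numeral_2_eq_2 algebra_simps)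
next
  case (4 j h)
  define N where "N = 2 * j + h + 2"
  have eN1: "2 * Suc j + h = N" by (simp add: N_def)
  have IH1: "Bal (Suc j) h + (N choose j) = (N choose (Suc j))" using 4(1) unfolding eN1 by simp
  have IH2: "Bal j (Suc (Suc h)) + (if j = 0 then 0 else (N choose (j - 1))) = (N choose j)"
  proof -
    have eN: "2 * j + Suc (Suc h) = N" by (simp add: N_def)
    show ?thesis using 4(2) unfolding eN .
  qed
  have p1: "(Suc N choose Suc j) = (N choose j) + (N choose Suc j)" by simp
  have p2: "(Suc N choose j) = (if j = 0 then 0 else (N choose (j - 1))) + (N choose j)"
  proof (cases j)
    case 0 then show ?thesis by simp
  next
    case (Suc j') then show ?thesis by simp
  qed
  have e: "2 * Suc j + Suc h = Suc N" by (simp add: N_def)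
  show ?case unfolding e using IH1 IH2 p1 p2 by simp
qed

lemma catalan_Bal: "catalan j = Bal j 0"
proof (cases j)
  case 0
  then show ?thesis by (simp add: catalan_def)
next
  case (Suc a)
  define M where "M = 2 * j"
  define X where "X = M choose j"
  define Y where "Y = M choose a"
  define B where "B = Bal j 0"
  have c: "B + Y = X" using Bal_closed[of j 0] Suc unfolding B_def X_def Y_def M_def by simp
  have e1: "Suc (a + j) = M" unfolding M_def using Suc by simp
  have m0: "Suc a * (M choose Suc a) = Suc j * (M choose a)" using Suc_times_binomial_add[of a j] unfolding e1 .
  have m: "j * X = Suc j * Y" using m0 unfolding X_def Y_def Suc[symmetric] .
  have d1: "Suc j * B + Suc j * Y = Suc j * X" using c by (metis distrib_left)
  have d2: "Suc j * X = j * X + X" by simp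
  have "Suc j * B = X" using d1 d2 m by linarith
  then have "X div Suc j = B" by (metis nonzero_mult_div_cancel_left Suc_neq_Zero)
  then show ?thesis unfolding catalan_def B_def X_def M_def by simp
qed



lemma Bal_0: "Bal 0 h = 1" by (induction h) auto

lemma sum_choose_lt: "(\<Sum>r<u. r choose h) = u choose Suc h"
proof (cases u)
  case 0 then show ?thesis by simp
next
  case (Suc u')
  then have "{..<u} = {..u'}" by auto
  then show ?thesis using sum_choose_upper[where n=u' and m=h] Suc by simp
qed

definition Mt :: "'a::comm_ring_1 \<Rightarrow> nat \<Rightarrow> nat \<Rightarrow> 'a" where
  "Mt x m h = (\<Sum>P\<in>PNC m. x ^ card (Arc P) * of_nat (card (vsing P) choose h))"

definition ZT :: "'a::comm_ring_1 \<Rightarrow> nat \<Rightarrow> nat \<Rightarrow> nat \<Rightarrow> 'a" where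
  "ZT x m h j = x ^ j * of_nat ((m choose (2 * j + h)) * Bal j h)"

definition Z :: "'a::comm_ring_1 \<Rightarrow> nat \<Rightarrow> nat \<Rightarrow> 'a" where
  "Z x m h = (\<Sum>j\<le>m. ZT x m h j)"

lemma Z_ext: "m \<le> M \<Longrightarrow> Z x m h = (\<Sum>j\<le>M. ZT x m h j)"
  unfolding Z_def
  by (rule sum.mono_neutral_left) (auto simp: ZT_def binomial_eq_0)

lemma Mt_rec:
  fixes x :: "'a::comm_ring_1"
  shows "Mt x (Suc m) h = Mt x m h + (case h of 0 \<Rightarrow> 0 | Suc h' \<Rightarrow> Mt x m h') + x * Mt x m (Suc h)"
proof -
  have "Mt x (Suc m) h = (\<Sum>Q\<in>PNC m. x ^ card (Arc Q) * (of_nat (Suc (card (vsing Q)) choose h) + x * (\<Sum>r<card (vsing Q). of_nat (r choose h))))"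
    unfolding Mt_def using recMo[where n=m and x=x and h="\<lambda>u. of_nat (u choose h)"] by simp
  also have "\<dots> = (\<Sum>Q\<in>PNC m. x ^ card (Arc Q) * (of_nat (card (vsing Q) choose h) + (case h of 0 \<Rightarrow> 0 | Suc h' \<Rightarrow> of_nat (card (vsing Q) choose h')) + x * of_nat (card (vsing Q) choose Suc h)))"
  proof (rule sum.cong[OF refl])
    fix Q
    have a: "(\<Sum>r<card (vsing Q). of_nat (r choose h) :: 'a) = of_nat (card (vsing Q) choose Suc h)"
      using arg_cong[OF sum_choose_lt[where u="card (vsing Q)" and h=h], of "of_nat :: nat \<Rightarrow> 'a"] by simp
    have b: "(of_nat (Suc (card (vsing Q)) choose h) :: 'a) = of_nat (card (vsing Q) choose h) + (case h of 0 \<Rightarrow> 0 | Suc h' \<Rightarrow> of_nat (card (vsing Q) choose h'))"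
      by (cases h) simp_all
    show "x ^ card (Arc Q) * (of_nat (Suc (card (vsing Q)) choose h) + x * (\<Sum>r<card (vsing Q). of_nat (r choose h))) =
      x ^ card (Arc Q) * (of_nat (card (vsing Q) choose h) + (case h of 0 \<Rightarrow> 0 | Suc h' \<Rightarrow> of_nat (card (vsing Q) choose h')) + x * of_nat (card (vsing Q) choose Suc h))"
      unfolding a b ..
  qed
  also have "\<dots> = Mt x m h + (case h of 0 \<Rightarrow> 0 | Suc h' \<Rightarrow> Mt x m h') + x * Mt x m (Suc h)"
    by (cases h) (simp_all add: Mt_def distrib_left sum.distrib sum_distrib_left mult_ac)
  finally show ?thesis .
qed

lemma term_id:
  "(Suc m choose (2 * j + h)) * Bal j h = (m choose (2 * j + h)) * Bal j h
    + (case h of 0 \<Rightarrow> 0 | Suc h' \<Rightarrow> (m choose (2 * j + h')) * Bal j h')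
    + (case j of 0 \<Rightarrow> 0 | Suc j' \<Rightarrow> (m choose (2 * j' + Suc h)) * Bal j' (Suc h))"
proof (cases j)
  case 0
  then show ?thesis
  proof (cases h)
    case 0 then show ?thesis using \<open>j = 0\<close> by simp
  next
    case (Suc h')
    then show ?thesis using \<open>j = 0\<close> by (simp add: Bal_0 algebra_simps)
  qed
next
  case (Suc j')
  then show ?thesis
  proof (cases h)
    case 0
    have "2 * j + h = Suc (2 * j' + Suc h)" using Suc 0 by simp
    then show ?thesis using Suc 0 by (simp add: algebra_simps)
  next
    case (Suc h')
    have e1: "2 * j + h = Suc (2 * j + h')" using Suc by simp
    have e2: "2 * j' + Suc h = 2 * j + h'" using \<open>j = Suc j'\<close> Suc by simp
    have "Bal j h = Bal j h' + Bal j' (Suc h)" using \<open>j = Suc j'\<close> Suc by simp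
    then show ?thesis using \<open>j = Suc j'\<close> Suc unfolding e1 e2 by (simp add: algebra_simps)
  qed
qed

lemma Z_rec:
  fixes x :: "'a::comm_ring_1"
  shows "Z x (Suc m) h = Z x m h + (case h of 0 \<Rightarrow> 0 | Suc h' \<Rightarrow> Z x m h') + x * Z x m (Suc h)"
proof -
  define C where "C j = (case j of 0 \<Rightarrow> 0 | Suc j' \<Rightarrow> x ^ j * of_nat ((m choose (2 * j' + Suc h)) * Bal j' (Suc h)))" for j
  define B where "B j = (case h of 0 \<Rightarrow> 0 | Suc h' \<Rightarrow> ZT x m h' j)" for j
  have "Z x (Suc m) h = (\<Sum>j\<le>Suc m. ZT x m h j + B j + C j)"
    unfolding Z_def
  proof (rule sum.cong[OF refl])
    fix j
    show "ZT x (Suc m) h j = ZT x m h j + B j + C j"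
      unfolding ZT_def B_def C_def term_id[of m j h]
      by (cases h; cases j) (simp_all add: distrib_left)
  qed
  also have "\<dots> = (\<Sum>j\<le>Suc m. ZT x m h j) + (\<Sum>j\<le>Suc m. B j) + (\<Sum>j\<le>Suc m. C j)"
    by (simp add: sum.distrib)
  also have "(\<Sum>j\<le>Suc m. ZT x m h j) = Z x m h" by (rule Z_ext[symmetric]) simp
  also have "(\<Sum>j\<le>Suc m. B j) = (case h of 0 \<Rightarrow> 0 | Suc h' \<Rightarrow> Z x m h')"
    by (cases h) (simp_all add: B_def Z_def ZT_def binomial_eq_0)
  also have "(\<Sum>j\<le>Suc m. C j) = x * Z x m (Suc h)"
  proof -
    have "(\<Sum>j\<le>Suc m. C j) = C 0 + (\<Sum>j\<le>m. C (Suc j))" by (rule sum.atMost_Suc_shift)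
    also have "\<dots> = (\<Sum>j\<le>m. x * ZT x m (Suc h) j)"
      by (simp add: C_def ZT_def mult_ac)
    also have "\<dots> = x * Z x m (Suc h)" by (simp add: Z_def sum_distrib_left)
    finally show ?thesis .
  qed
  finally show ?thesis .
qed

lemma Mt_Z: "\<forall>h. Mt x m h = Z x m h"
proof (induction m)
  case 0
  show ?case by (simp add: Mt_def Z_def ZT_def PNC_0 vsing_empty Arc_empty Bal_0)
next
  case (Suc m)
  then show ?case by (simp add: Mt_rec Z_rec split: nat.split)
qed

lemma Mo_closed:
  fixes x :: "'a::comm_ring_1"
  shows "Mo m x = (\<Sum>j\<le>m. x ^ j * of_nat ((m choose (2 * j)) * catalan j))"
proof -
  have e: "{P \<in> NC m. poor P} = PNC m" by (auto simp: NC_def PNC_def)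
  have "Mo m x = Mt x m 0"
    by (simp add: Mo_def Mt_def e)
  also have "\<dots> = Z x m 0" using Mt_Z by blast
  finally show ?thesis by (simp add: Z_def ZT_def catalan_Bal)
qed



definition sing :: "nat set set \<Rightarrow> nat set set" where
  "sing Q = {B\<in>Q. card B = 1}"

lemma sing_newP: "Q \<in> set_partitions n \<Longrightarrow> sing (newP n Q) = insert {Suc n} (sing Q)"
  by (auto simp: sing_def newP_def)

lemma card_sing_newP: "Q \<in> set_partitions n \<Longrightarrow> card (sing (newP n Q)) = Suc (card (sing Q))"
proof -
  assume Q: "Q \<in> set_partitions n"
  have "{Suc n} \<notin> sing Q" using single_notin[OF Q] by (auto simp: sing_def)
  moreover have "finite (sing Q)" using sp_finite[OF Q] by (simp add: sing_def)
  ultimately show ?thesis by (simp add: sing_newP[OF Q])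
qed

lemma sing_insP:
  assumes Q: "Q \<in> set_partitions n" and B: "B \<in> Q"
  shows "sing (insP n Q B) = sing Q - {B}"
proof -
  have nB: "Suc n \<notin> B" using sp_block(1)[OF Q B] by auto
  have "card B > 0" using sp_block(2,3)[OF Q B] by (simp add: card_gt_0_iff)
  then have "card (insert (Suc n) B) \<noteq> 1" using nB sp_block(2,3)[OF Q B] by simp
  then show ?thesis by (auto simp: sing_def insP_def)
qed

lemma card_sing_insP:
  assumes Q: "Q \<in> set_partitions n" and B: "B \<in> Q"
  shows "card (sing (insP n Q B)) = (if card B = 1 then card (sing Q) - 1 else card (sing Q))"
proof -
  have fin: "finite (sing Q)" using sp_finite[OF Q] by (simp add: sing_def)
  have "B \<in> sing Q \<longleftrightarrow> card B = 1" using B by (simp add: sing_def)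
  then show ?thesis by (simp add: sing_insP[OF Q B] card_Diff_singleton_if fin)
qed

lemma sum_if_sing:
  fixes u v :: "'a::comm_ring_1"
  assumes Q: "Q \<in> set_partitions n"
  shows "(\<Sum>B\<in>Q. if card B = 1 then u else v) = of_nat (card (sing Q)) * u + of_nat (card Q - card (sing Q)) * v"
proof -
  have f: "finite Q" using sp_finite[OF Q] .
  have "(\<Sum>B\<in>Q. if card B = 1 then u else v) = (\<Sum>B\<in>Q \<inter> {B. card B = 1}. u) + (\<Sum>B\<in>Q \<inter> - {B. card B = 1}. v)"
    by (rule sum.If_cases[OF f])
  also have "Q \<inter> {B. card B = 1} = sing Q" by (auto simp: sing_def)
  also have "Q \<inter> - {B. card B = 1} = Q - sing Q" by (auto simp: sing_def)
  finally have e: "(\<Sum>B\<in>Q. if card B = 1 then u else v) = (\<Sum>B\<in>sing Q. u) + (\<Sum>B\<in>Q - sing Q. v)" .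
  have "card (Q - sing Q) = card Q - card (sing Q)" using f by (intro card_Diff_subset) (auto simp: sing_def intro: finite_subset)
  then show ?thesis unfolding e by simp
qed

lemma card_sp_le: "P \<in> set_partitions n \<Longrightarrow> card P \<le> n"
proof -
  assume P: "P \<in> set_partitions n"
  have "card P = card (Max ` P)" using Max_inj_on[OF P subset_refl] by (simp add: card_image)
  also have "\<dots> \<le> card {1..n}" using block_Max(2,3)[OF P] by (intro card_mono) auto
  finally show ?thesis by simp
qed

lemma card_sing_le: "P \<in> set_partitions n \<Longrightarrow> card (sing P) \<le> card P"
  using sp_finite by (auto simp: sing_def intro: card_mono)

lemma recX:
  fixes x :: "'a::comm_ring_1"
  shows "(\<Sum>P\<in>set_partitions (Suc n). x ^ card (Arc P) * f (card P)) =
    (\<Sum>Q\<in>set_partitions n. x ^ card (Arc Q) * (f (Suc (card Q)) + x * of_nat (card Q) * f (card Q)))"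
proof -
  have "(\<Sum>P\<in>set_partitions (Suc n). x ^ card (Arc P) * f (card P)) = (\<Sum>P\<in>set_partitions (Suc n). wt x x P * f (card P))"
    by (rule sum.cong[OF refl]) (simp add: wt_xx)
  also have "\<dots> = (\<Sum>Q\<in>set_partitions n. wt x x Q * (f (Suc (card Q)) + (\<Sum>B\<in>Q. if Max B = n then x else x) * f (card Q)))"
    by (rule recB)
  also have "\<dots> = (\<Sum>Q\<in>set_partitions n. x ^ card (Arc Q) * (f (Suc (card Q)) + x * of_nat (card Q) * f (card Q)))"
    by (rule sum.cong[OF refl]) (simp add: wt_xx mult_ac)
  finally show ?thesis .
qed

lemma recS:
  fixes x :: "'a::comm_ring_1"
  shows "(\<Sum>P\<in>set_partitions (Suc n). x ^ card (Arc P) * F (card P) (card (sing P))) =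
    (\<Sum>Q\<in>set_partitions n. x ^ card (Arc Q) * (F (Suc (card Q)) (Suc (card (sing Q)))
      + x * (of_nat (card (sing Q)) * F (card Q) (card (sing Q) - 1) + of_nat (card Q - card (sing Q)) * F (card Q) (card (sing Q)))))"
proof -
  have "(\<Sum>P\<in>set_partitions (Suc n). x ^ card (Arc P) * F (card P) (card (sing P))) =
    (\<Sum>Q\<in>set_partitions n. x ^ card (Arc (newP n Q)) * F (card (newP n Q)) (card (sing (newP n Q)))
      + (\<Sum>B\<in>Q. x ^ card (Arc (insP n Q B)) * F (card (insP n Q B)) (card (sing (insP n Q B)))))"
    by (rule sp_decomp)
  also have "\<dots> = (\<Sum>Q\<in>set_partitions n. x ^ card (Arc Q) * (F (Suc (card Q)) (Suc (card (sing Q)))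
      + x * (of_nat (card (sing Q)) * F (card Q) (card (sing Q) - 1) + of_nat (card Q - card (sing Q)) * F (card Q) (card (sing Q)))))"
  proof (rule sum.cong[OF refl])
    fix Q assume Q: "Q \<in> set_partitions n"
    have "(\<Sum>B\<in>Q. x ^ card (Arc (insP n Q B)) * F (card (insP n Q B)) (card (sing (insP n Q B)))) =
      (\<Sum>B\<in>Q. x * x ^ card (Arc Q) * (if card B = 1 then F (card Q) (card (sing Q) - 1) else F (card Q) (card (sing Q))))"
      by (rule sum.cong[OF refl]) (simp add: card_Arc_insP[OF Q] card_insP[OF Q] card_sing_insP[OF Q])
    also have "\<dots> = x * x ^ card (Arc Q) * (\<Sum>B\<in>Q. if card B = 1 then F (card Q) (card (sing Q) - 1) else F (card Q) (card (sing Q)))"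
      by (simp add: sum_distrib_left)
    also have "\<dots> = x * x ^ card (Arc Q) * (of_nat (card (sing Q)) * F (card Q) (card (sing Q) - 1) + of_nat (card Q - card (sing Q)) * F (card Q) (card (sing Q)))"
      by (subst sum_if_sing[OF Q]) simp
    finally show "x ^ card (Arc (newP n Q)) * F (card (newP n Q)) (card (sing (newP n Q)))
      + (\<Sum>B\<in>Q. x ^ card (Arc (insP n Q B)) * F (card (insP n Q B)) (card (sing (insP n Q B)))) =
      x ^ card (Arc Q) * (F (Suc (card Q)) (Suc (card (sing Q)))
      + x * (of_nat (card (sing Q)) * F (card Q) (card (sing Q) - 1) + of_nat (card Q - card (sing Q)) * F (card Q) (card (sing Q))))"
      by (simp add: Arc_newP[OF Q] card_newP[OF Q] card_sing_newP[OF Q] distrib_left mult_ac)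
  qed
  finally show ?thesis .
qed

lemma kid: "s \<le> q \<Longrightarrow> s * (s - 1 choose t) + (q - s) * (s choose t) = (q - t) * (s choose t)"
proof (cases "t \<le> s")
  case False
  assume "s \<le> q"
  then show ?thesis using False by (cases s) (simp_all add: binomial_eq_0)
next
  case True
  assume sq: "s \<le> q"
  have "s * (s - 1 choose t) = (s - t) * (s choose t)"
    using binomial_absorb_comp[of s t] by simp
  then show ?thesis using True sq by (simp add: diff_mult_distrib[symmetric] add_mult_distrib[symmetric])
qed

lemma mark_claim:
  fixes x :: "'a::comm_ring_1"
  shows "\<forall>\<phi> t. (\<Sum>P\<in>set_partitions n. x ^ card (Arc P) * \<phi> (card P) * of_nat (card (sing P) choose t)) =
    of_nat (n choose t) * (\<Sum>P\<in>set_partitions (n - t). x ^ card (Arc P) * \<phi> (card P + t))"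
proof (induction n)
  case 0
  show ?case
  proof (intro allI)
    fix \<phi> :: "nat \<Rightarrow> 'a" and t
    show "(\<Sum>P\<in>set_partitions 0. x ^ card (Arc P) * \<phi> (card P) * of_nat (card (sing P) choose t)) =
      of_nat (0 choose t) * (\<Sum>P\<in>set_partitions (0 - t). x ^ card (Arc P) * \<phi> (card P + t))"
      by (cases t) (simp_all add: sp_0 sing_def Arc_empty)
  qed
next
  case (Suc n)
  define M where "M \<psi> t = (\<Sum>P\<in>set_partitions n. x ^ card (Arc P) * \<psi> (card P) * of_nat (card (sing P) choose t))" for \<psi> t
  have IH: "M \<psi> t = of_nat (n choose t) * (\<Sum>P\<in>set_partitions (n - t). x ^ card (Arc P) * \<psi> (card P + t))" for \<psi> t
    using Suc.IH unfolding M_def by blast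
  show ?case
  proof (intro allI)
    fix \<phi> :: "nat \<Rightarrow> 'a" and t
    have "(\<Sum>P\<in>set_partitions (Suc n). x ^ card (Arc P) * \<phi> (card P) * of_nat (card (sing P) choose t)) =
      (\<Sum>P\<in>set_partitions (Suc n). x ^ card (Arc P) * (\<lambda>k s. \<phi> k * of_nat (s choose t)) (card P) (card (sing P)))"
      by (simp add: mult_ac)
    also have "\<dots> = (\<Sum>Q\<in>set_partitions n. x ^ card (Arc Q) * (\<phi> (Suc (card Q)) * of_nat (Suc (card (sing Q)) choose t)
      + x * (of_nat (card (sing Q)) * (\<phi> (card Q) * of_nat ((card (sing Q) - 1) choose t)) + of_nat (card Q - card (sing Q)) * (\<phi> (card Q) * of_nat (card (sing Q) choose t)))))"
      by (rule recS)
    also have "\<dots> = (\<Sum>Q\<in>set_partitions n. x ^ card (Arc Q) * (\<phi> (Suc (card Q)) * of_nat (card (sing Q) choose t)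
      + (case t of 0 \<Rightarrow> 0 | Suc t' \<Rightarrow> \<phi> (Suc (card Q)) * of_nat (card (sing Q) choose t'))
      + x * (\<phi> (card Q) * of_nat (card Q - t) * of_nat (card (sing Q) choose t))))"
    proof (rule sum.cong[OF refl])
      fix Q assume Q: "Q \<in> set_partitions n"
      have k: "card (sing Q) * (card (sing Q) - 1 choose t) + (card Q - card (sing Q)) * (card (sing Q) choose t) = (card Q - t) * (card (sing Q) choose t)"
        by (rule kid[OF card_sing_le[OF Q]])
      have kR: "of_nat (card (sing Q)) * of_nat (card (sing Q) - 1 choose t) + of_nat (card Q - card (sing Q)) * of_nat (card (sing Q) choose t) = (of_nat (card Q - t) * of_nat (card (sing Q) choose t) :: 'a)"
        using arg_cong[OF k, of "of_nat :: nat \<Rightarrow> 'a"] by simp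
      have c: "(of_nat (Suc (card (sing Q)) choose t) :: 'a) = of_nat (card (sing Q) choose t) + (case t of 0 \<Rightarrow> 0 | Suc t' \<Rightarrow> of_nat (card (sing Q) choose t'))"
        by (cases t) simp_all
      have "of_nat (card (sing Q)) * (\<phi> (card Q) * of_nat ((card (sing Q) - 1) choose t)) + of_nat (card Q - card (sing Q)) * (\<phi> (card Q) * of_nat (card (sing Q) choose t))
        = \<phi> (card Q) * (of_nat (card (sing Q)) * of_nat (card (sing Q) - 1 choose t) + of_nat (card Q - card (sing Q)) * of_nat (card (sing Q) choose t))"
        by (simp add: algebra_simps)
      also have "\<dots> = \<phi> (card Q) * of_nat (card Q - t) * of_nat (card (sing Q) choose t)"
        unfolding kR by (simp add: mult_ac)
      finally have d: "of_nat (card (sing Q)) * (\<phi> (card Q) * of_nat ((card (sing Q) - 1) choose t)) + of_nat (card Q - card (sing Q)) * (\<phi> (card Q) * of_nat (card (sing Q) choose t))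
        = \<phi> (card Q) * of_nat (card Q - t) * of_nat (card (sing Q) choose t)" .
      show "x ^ card (Arc Q) * (\<phi> (Suc (card Q)) * of_nat (Suc (card (sing Q)) choose t)
      + x * (of_nat (card (sing Q)) * (\<phi> (card Q) * of_nat ((card (sing Q) - 1) choose t)) + of_nat (card Q - card (sing Q)) * (\<phi> (card Q) * of_nat (card (sing Q) choose t)))) =
        x ^ card (Arc Q) * (\<phi> (Suc (card Q)) * of_nat (card (sing Q) choose t)
      + (case t of 0 \<Rightarrow> 0 | Suc t' \<Rightarrow> \<phi> (Suc (card Q)) * of_nat (card (sing Q) choose t'))
      + x * (\<phi> (card Q) * of_nat (card Q - t) * of_nat (card (sing Q) choose t)))"
        unfolding d c by (cases t) (simp_all add: algebra_simps)
    qed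
    also have "\<dots> = M (\<lambda>k. \<phi> (Suc k)) t + (case t of 0 \<Rightarrow> 0 | Suc t' \<Rightarrow> M (\<lambda>k. \<phi> (Suc k)) t')
        + x * M (\<lambda>k. \<phi> k * of_nat (k - t)) t"
      unfolding M_def by (cases t) (simp_all add: algebra_simps sum.distrib sum_distrib_left)
    also have "\<dots> = of_nat (Suc n choose t) * (\<Sum>P\<in>set_partitions (Suc n - t). x ^ card (Arc P) * \<phi> (card P + t))"
    proof (cases t)
      case 0
      have "(\<Sum>P\<in>set_partitions (Suc n). x ^ card (Arc P) * \<phi> (card P)) =
        (\<Sum>Q\<in>set_partitions n. x ^ card (Arc Q) * (\<phi> (Suc (card Q)) + x * of_nat (card Q) * \<phi> (card Q)))"
        by (rule recX)
      then show ?thesis using 0 by (simp add: IH algebra_simps sum.distrib sum_distrib_left)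
    next
      case (Suc t')
      have A: "of_nat (n choose t) * (\<Sum>P\<in>set_partitions (n - t). x ^ card (Arc P) * \<phi> (Suc (card P + t)))
         + x * (of_nat (n choose t) * (\<Sum>P\<in>set_partitions (n - t). x ^ card (Arc P) * (\<phi> (card P + t) * of_nat (card P + t - t))))
         = of_nat (n choose t) * (\<Sum>P\<in>set_partitions (n - t'). x ^ card (Arc P) * \<phi> (card P + t))"
      proof (cases "t \<le> n")
        case True
        then have e: "n - t' = Suc (n - t)" using Suc by simp
        have r: "(\<Sum>P\<in>set_partitions (Suc (n - t)). x ^ card (Arc P) * \<phi> (card P + t)) =
          (\<Sum>Q\<in>set_partitions (n - t). x ^ card (Arc Q) * (\<phi> (Suc (card Q) + t) + x * of_nat (card Q) * \<phi> (card Q + t)))"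
          using recX[where n="n - t" and x=x and f="\<lambda>k. \<phi> (k + t)"] by simp
        show ?thesis unfolding e r
          by (simp add: algebra_simps sum.distrib sum_distrib_left)
      next
        case False
        then show ?thesis by (simp add: binomial_eq_0)
      qed
      have "M (\<lambda>k. \<phi> (Suc k)) t + M (\<lambda>k. \<phi> (Suc k)) t' + x * M (\<lambda>k. \<phi> k * of_nat (k - t)) t
        = of_nat (n choose t) * (\<Sum>P\<in>set_partitions (n - t'). x ^ card (Arc P) * \<phi> (card P + t))
         + of_nat (n choose t') * (\<Sum>P\<in>set_partitions (n - t'). x ^ card (Arc P) * \<phi> (card P + t))"
        unfolding IH A[symmetric] using Suc by (simp add: algebra_simps)
      also have "\<dots> = of_nat (Suc n choose t) * (\<Sum>P\<in>set_partitions (Suc n - t). x ^ card (Arc P) * \<phi> (card P + t))"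
        using Suc by (simp add: algebra_simps)
      finally show ?thesis using Suc by simp
    qed
    finally show "(\<Sum>P\<in>set_partitions (Suc n). x ^ card (Arc P) * \<phi> (card P) * of_nat (card (sing P) choose t)) =
      of_nat (Suc n choose t) * (\<Sum>P\<in>set_partitions (Suc n - t). x ^ card (Arc P) * \<phi> (card P + t))" .
  qed
qed



lemma Bxy_wt: "Bxy n x y = (\<Sum>P\<in>set_partitions n. wt x y P)"
  by (simp add: Bxy_def wt_def)

lemma Bx_eq: "Bx n x = (\<Sum>P\<in>set_partitions n. x ^ card (Arc P))"
  by (simp add: Bx_def Bxy_wt wt_xx)

lemma part1:
  fixes x y :: "'a::comm_ring_1"
  shows "Bxy (n + 1) x y = (\<Sum>k=0..n. of_nat (n choose k) * Bx k x * y ^ (n - k))"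
  using spec[OF B_claim[of x y n], of "\<lambda>_. 1"]
  by (simp add: Bxy_wt Bx_def atLeast0AtMost mult_ac)

lemma part3:
  fixes x y :: "'a::comm_ring_1"
  shows "Cxy (n + 1) x y = (\<Sum>k=0..n. of_nat (n choose k) * Mo k x * y ^ (n - k))"
proof -
  have e: "\<And>k. {P \<in> NC k. poor P} = PNC k" by (auto simp: NC_def PNC_def)
  show ?thesis
    using spec[OF NC_claim[of x y n], of "\<lambda>_. 1"]
    by (simp add: Cxy_def wt_def Mo_def e atLeast0AtMost mult_ac)
qed

lemma sum_rev_atMost:
  fixes k :: nat
  shows "(\<Sum>t\<le>k. g t) = (\<Sum>i\<le>k. g (k - i))"
  by (rule sum.reindex_bij_witness[where i="\<lambda>i. k - i" and j="\<lambda>i. k - i"]) auto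

lemma feasible_iff: "P \<in> set_partitions k \<Longrightarrow> feasible P \<longleftrightarrow> card (sing P) = 0"
proof -
  assume P: "P \<in> set_partitions k"
  have fin: "finite (sing P)" using sp_finite[OF P] by (simp add: sing_def)
  have "card B \<ge> 1" if "B \<in> P" for B using sp_block(2,3)[OF P that] by (simp add: Suc_leI card_gt_0_iff)
  then have "feasible P \<longleftrightarrow> sing P = {}" by (force simp: feasible_def sing_def)
  then show ?thesis using fin by simp
qed

lemma Fe_alt:
  fixes x :: "'a::comm_ring_1"
  shows "Fe k x = (\<Sum>i\<le>k. of_nat (k choose i) * Bx i x * (- 1) ^ (k - i))"
proof -
  have ind: "(if card (sing P) = 0 then 1 else 0 :: 'a) = (\<Sum>t\<le>k. (- 1) ^ t * of_nat (card (sing P) choose t))"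
    if P: "P \<in> set_partitions k" for P
  proof -
    have sk: "card (sing P) \<le> k" using card_sing_le[OF P] card_sp_le[OF P] by linarith
    have "(if card (sing P) = 0 then 1 else 0 :: 'a) = (- 1 + 1) ^ card (sing P)" by (simp add: power_0_left)
    also have "\<dots> = (\<Sum>t\<le>card (sing P). of_nat (card (sing P) choose t) * (- 1) ^ t * 1 ^ (card (sing P) - t))"
      by (rule binomial_ring)
    also have "\<dots> = (\<Sum>t\<le>k. (- 1) ^ t * of_nat (card (sing P) choose t))"
      using sk by (intro sum.mono_neutral_cong_left) (auto simp: binomial_eq_0 mult_ac)
    finally show ?thesis .
  qed
  have "Fe k x = (\<Sum>P\<in>set_partitions k. x ^ card (Arc P) * (if card (sing P) = 0 then 1 else 0))"
    unfolding Fe_def by (simp add: sum.inter_filter finite_sp feasible_iff cong: sum.cong) (rule sum.cong[OF refl], simp)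
  also have "\<dots> = (\<Sum>P\<in>set_partitions k. \<Sum>t\<le>k. (- 1) ^ t * (x ^ card (Arc P) * 1 * of_nat (card (sing P) choose t)))"
    by (rule sum.cong[OF refl]) (simp add: ind sum_distrib_left mult_ac)
  also have "\<dots> = (\<Sum>t\<le>k. (- 1) ^ t * (\<Sum>P\<in>set_partitions k. x ^ card (Arc P) * 1 * of_nat (card (sing P) choose t)))"
    by (simp add: sum.swap[of _ "set_partitions k"] sum_distrib_left)
  also have "\<dots> = (\<Sum>t\<le>k. (- 1) ^ t * (of_nat (k choose t) * Bx (k - t) x))"
  proof -
    have mc: "(\<Sum>P\<in>set_partitions k. x ^ card (Arc P) * (\<lambda>_. 1::'a) (card P) * of_nat (card (sing P) choose t)) =
      of_nat (k choose t) * (\<Sum>P\<in>set_partitions (k - t). x ^ card (Arc P) * (\<lambda>_. 1::'a) (card P + t))" for t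
      using spec[OF spec[OF mark_claim[of x k], of "\<lambda>_. 1"], of t] by simp
    show ?thesis using mc by (simp add: Bx_eq)
  qed
  also have "\<dots> = (\<Sum>i\<le>k. (- 1) ^ (k - i) * (of_nat (k choose (k - i)) * Bx (k - (k - i)) x))"
    by (rule sum_rev_atMost)
  also have "\<dots> = (\<Sum>i\<le>k. of_nat (k choose i) * Bx i x * (- 1) ^ (k - i))"
    by (rule sum.cong[OF refl]) (auto simp: binomial_symmetric[symmetric] mult_ac)
  finally show ?thesis .
qed

lemma part2:
  fixes x y :: "'a::comm_ring_1"
  shows "(\<Sum>k=0..n. of_nat (n choose k) * Bx k x * y ^ (n - k))
           = (\<Sum>k=0..n. of_nat (n choose k) * Fe k x * (y + 1) ^ (n - k))"
proof -
  have "(\<Sum>k=0..n. of_nat (n choose k) * Fe k x * (y + 1) ^ (n - k)) =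
    (\<Sum>k\<le>n. of_nat (n choose k) * (y + 1) ^ (n - k) * (\<Sum>i\<le>k. of_nat (k choose i) * Bx i x * (- 1) ^ (k - i)))"
    by (simp add: atLeast0AtMost Fe_alt mult_ac)
  also have "\<dots> = (\<Sum>i\<le>n. of_nat (n choose i) * Bx i x * (y + 1 + - 1) ^ (n - i))"
    by (rule binom_conv)
  finally show ?thesis by (simp add: atLeast0AtMost)
qed

lemma even_sum:
  fixes g :: "nat \<Rightarrow> 'a::comm_ring_1"
  shows "(\<Sum>i\<le>k. if even i then g (i div 2) else 0) = (\<Sum>j\<le>k div 2. g j)"
proof -
  have "(\<Sum>i\<le>k. if even i then g (i div 2) else 0) = (\<Sum>i\<in>{i\<in>{..k}. even i}. g (i div 2))"
    by (rule sum.inter_filter[symmetric]) simp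
  also have "{i\<in>{..k}. even i} = (\<lambda>j. 2 * j) ` {..k div 2}"
  proof
    show "{i\<in>{..k}. even i} \<subseteq> (\<lambda>j. 2 * j) ` {..k div 2}"
    proof
      fix i assume "i \<in> {i\<in>{..k}. even i}"
      then obtain j where "i = 2 * j" "2 * j \<le> k" by (auto elim!: evenE)
      then show "i \<in> (\<lambda>j. 2 * j) ` {..k div 2}" by auto
    qed
    show "(\<lambda>j. 2 * j) ` {..k div 2} \<subseteq> {i\<in>{..k}. even i}" by auto
  qed
  also have "(\<Sum>i\<in>(\<lambda>j. 2 * j) ` {..k div 2}. g (i div 2)) = (\<Sum>j\<le>k div 2. g j)"
    by (subst sum.reindex) (auto simp: inj_on_def)
  finally show ?thesis .
qed

lemma part4:
  fixes x y :: "'a::comm_ring_1"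
  shows "(\<Sum>k=0..n. of_nat (n choose k) * Mo k x * y ^ (n - k))
           = (\<Sum>k=0..n div 2. of_nat (catalan k) * of_nat (n choose (2 * k)) * x ^ k * (y + 1) ^ (n - 2 * k))"
proof -
  define A where "A i = (if even i then x ^ (i div 2) * of_nat (catalan (i div 2)) else 0)" for i
  have Mo_A: "Mo k x = (\<Sum>i\<le>k. of_nat (k choose i) * A i * 1 ^ (k - i))" for k
  proof -
    have "(\<Sum>i\<le>k. of_nat (k choose i) * A i * 1 ^ (k - i)) = (\<Sum>i\<le>k. if even i then of_nat (k choose (2 * (i div 2))) * (x ^ (i div 2) * of_nat (catalan (i div 2))) else 0)"
      by (rule sum.cong[OF refl]) (auto simp: A_def)
    also have "\<dots> = (\<Sum>j\<le>k div 2. of_nat (k choose (2 * j)) * (x ^ j * of_nat (catalan j)))"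
      by (rule even_sum)
    also have "\<dots> = (\<Sum>j\<le>k. of_nat (k choose (2 * j)) * (x ^ j * of_nat (catalan j)))"
    proof (rule sum.mono_neutral_left)
      show "\<forall>i\<in>{..k} - {..k div 2}. of_nat (k choose (2 * i)) * (x ^ i * of_nat (catalan i)) = 0"
      proof
        fix i assume "i \<in> {..k} - {..k div 2}"
        then have "k < 2 * i" by auto
        then show "of_nat (k choose (2 * i)) * (x ^ i * of_nat (catalan i)) = 0" by (simp add: binomial_eq_0)
      qed
    qed auto
    also have "\<dots> = (\<Sum>j\<le>k. x ^ j * of_nat ((k choose (2 * j)) * catalan j))"
      by (rule sum.cong[OF refl]) (simp add: mult_ac)
    finally show ?thesis by (simp add: Mo_closed)
  qed
  have "(\<Sum>k=0..n. of_nat (n choose k) * Mo k x * y ^ (n - k)) =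
     (\<Sum>k\<le>n. of_nat (n choose k) * y ^ (n - k) * (\<Sum>i\<le>k. of_nat (k choose i) * A i * 1 ^ (k - i)))"
    by (simp add: atLeast0AtMost Mo_A mult_ac)
  also have "\<dots> = (\<Sum>i\<le>n. of_nat (n choose i) * A i * (y + 1) ^ (n - i))"
    by (rule binom_conv)
  also have "\<dots> = (\<Sum>i\<le>n. if even i then of_nat (n choose (2 * (i div 2))) * (x ^ (i div 2) * of_nat (catalan (i div 2))) * (y + 1) ^ (n - 2 * (i div 2)) else 0)"
    by (rule sum.cong[OF refl]) (auto simp: A_def)
  also have "\<dots> = (\<Sum>j\<le>n div 2. of_nat (n choose (2 * j)) * (x ^ j * of_nat (catalan j)) * (y + 1) ^ (n - 2 * j))"
    by (rule even_sum)
  finally show ?thesis by (simp add: atLeast0AtMost mult_ac)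
qed

theorem theorem3p4:
  fixes n :: nat and x y :: "'a::comm_ring_1"
  shows "Bxy (n + 1) x y = (\<Sum>k=0..n. of_nat (n choose k) * Bx k x * y ^ (n - k))
       \<and> (\<Sum>k=0..n. of_nat (n choose k) * Bx k x * y ^ (n - k))
           = (\<Sum>k=0..n. of_nat (n choose k) * Fe k x * (y + 1) ^ (n - k))
       \<and> Cxy (n + 1) x y = (\<Sum>k=0..n. of_nat (n choose k) * Mo k x * y ^ (n - k))
       \<and> (\<Sum>k=0..n. of_nat (n choose k) * Mo k x * y ^ (n - k))
           = (\<Sum>k=0..n div 2. of_nat (catalan k) * of_nat (n choose (2 * k)) * x ^ k * (y + 1) ^ (n - 2 * k))"
  using part1 part2 part3 part4 by blast


end
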